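(* Let $l\geq 1$, let $q_1\geq q_2\geq\cdots\geq q_l\geq 1$ be integers, $N=q_1+\cdots+q_l$, and $k\in\mathbb{C}$. Define the following elements of $V^{\kappa}(\mathfrak{b})$ (notation as in the context): $$W^{(1)}_{p,q}=\sum_{\substack{1\leq i,j\leq N,\ \mathrm{row}(i)=p,\ \mathrm{row}(j)=q,\\ \mathrm{col}(i)=\mathrm{col}(j)}} e_{i,j}[-1]$$ for pairs $(p,q)$ with either $1\leq p,q\leq q_l$ or $q_l<p=q\leq q_1$; and, for $1\leq p,q\leq q_l$, \begin{align*} W^{(2)}_{p,q}&=\sum_{\substack{\mathrm{col}(i)=\mathrm{col}(j)+1\\ \mathrm{row}(i)=p,\ \mathrm{row}(j)=q}}e_{i,j}[-1]-\sum_{\substack{\mathrm{col}(i)=\mathrm{col}(j)\\ \mathrm{row}(i)=p,\ \mathrm{row}(j)=q}}\gamma_{\mathrm{col}(i)}\,e_{i,j}[-2]\\ &\quad+\sum_{\substack{\mathrm{col}(u)=\mathrm{col}(j)<\mathrm{col}(i)=\mathrm{col}(v)\\ \mathrm{row}(u)=\mathrm{row}(v)\leq q_l\\ \mathrm{row}(i)=p,\ \mathrm{row}(j)=q}} e_{u,j}[-1]\,e_{i,v}[-1] -\sum_{\substack{\mathrm{col}(u)=\mathrm{col}(j)\geq\mathrm{col}(i)=\mathrm{col}(v)\\ \mathrm{row}(u)=\mathrm{row}(v)>q_l\\ \mathrm{row}(i)=p,\ \mathrm{row}(j)=q}} e_{u,j}[-1]\,e_{i,v}[-1], \end{align*} where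 all indices $i,j,u,v$ range over $\{1,\dots,N\}$. Then every such $W^{(1)}_{p,q}$ and every such $W^{(2)}_{p,q}$ lies in the $W$-algebra $\mathcal{W}^k(\mathfrak{gl}(N),f)$, i.e. $d_0(W^{(1)}_{p,q})=0$ and $d_0(W^{(2)}_{p,q})=0$.
   Context: Indexing: for $1\leq i\leq N$, $\mathrm{col}(i)=s$ if $\sum_{j=1}^{s-1}q_j<i\leq\sum_{j=1}^{s}q_j$, and $\mathrm{row}(i)=i-\sum_{j=1}^{\mathrm{col}(i)-1}q_j$. For an index $i$, $\hat{i}$ denotes the index with $\mathrm{col}(\hat i)=\mathrm{col}(i)+1$, $\mathrm{row}(\hat i)=\mathrm{row}(i)$ (it exists iff $\mathrm{col}(i)<l$ and $\mathrm{row}(i)\leq q_{\mathrm{col}(i)+1}$), and $\tilde{i}$ the index with $\mathrm{col}(\tilde i)=\mathrm{col}(i)-1$, $\mathrm{row}(\tilde i)=\mathrm{row}(i)$ (exists iff $\mathrm{col}(i)>1$); any term involving a nonexistent $\hat i$ or $\tilde i$ is interpreted as $0$. The nilpotent element is $f=\sum_{j}e_{\hat j,j}\in\mathfrak{gl}(N)$ (sum over $j$ for which $\hat j$ exists), where $e_{i,j}$ are matrix units. Set $\alpha_s=k+N-q_s$ and $\gamma_a=\sum_{u=a+1}^{l}\alpha_u$. Let $\mathfrak{b}=\bigoplus_{\mathrm{col}(i)\geq\mathrm{col}(j)}\mathbb{C}e_{i,j}\subset\mathfrak{gl}(N)$ with bilinear form $\kappa(e_{i,j},e_{p,q})=\alpha_{\mathrm{col}(i)}\delta_{i,q}\delta_{p,j}+\delta_{i,j}\delta_{p,q}$.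 Let $\mathfrak{a}=\mathfrak{b}\oplus\bigoplus_{\mathrm{col}(i)>\mathrm{col}(j)}\mathbb{C}\psi_{i,j}$ be the Lie superalgebra with $e_{i,j}$ even, $\psi_{i,j}$ odd, brackets of $\mathfrak b$ as in $\mathfrak{gl}(N)$, $[e_{i,j},\psi_{p,q}]=\delta_{j,p}\psi_{i,q}-\delta_{i,q}\psi_{p,j}$, $[\psi_{i,j},\psi_{p,q}]=0$, and form $\tilde\kappa$ equal to $\kappa$ on $\mathfrak b$ and zero on all pairs involving some $\psi$. $V^{\kappa}(\mathfrak b)\subset V^{\tilde\kappa}(\mathfrak a)$ are the universal affine vertex (super)algebras, with OPE $u(z)v(w)\sim [u,v](w)/(z-w)+\tilde\kappa(u,v)/(z-w)^2$ for $u,v\in\mathfrak a$. For $u\in\mathfrak a$, $u[-s]$ denotes the state $ut^{-s}|0\rangle$, and juxtaposition denotes the $(-1)$-product, $x\,y=x_{(-1)}y$ (right-nested for several factors). $d_0\colon V^{\kappa}(\mathfrak b)\to V^{\tilde\kappa}(\mathfrak a)$ is the odd map (derivation of all $n$-th products, i.e. $d_0(x_{(m)}y)=(d_0x)_{(m)}y+x_{(m)}d_0y$ for even $x$) with $d_0|0\rangle=0$, $d_0\partial=\partial d_0$, and \begin{align*} d_0(e_{i,j}[-1])&=\sum_{\mathrm{col}(i)>\mathrm{col}(r)\geq\mathrm{col}(j)}e_{r,j}[-1]\psi_{i,r}[-1]-\sum_{\mathrm{col}(j)<\mathrm{col}(r)\leq\mathrm{col}(i)}\psi_{r,j}[-1]e_{i,r}[-1]\\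 &\quad+\delta(\mathrm{col}(i)>\mathrm{col}(j))\,\alpha_{\mathrm{col}(i)}\psi_{i,j}[-2]+\psi_{\hat i,j}[-1]-\psi_{i,\tilde j}[-1]. \end{align*} The $W$-algebra is $\mathcal{W}^k(\mathfrak{gl}(N),f)=\{y\in V^{\kappa}(\mathfrak b)\mid d_0(y)=0\}$. *)

theory Defs
  imports Complex_Main
begin

section \<open>Combinatorics of the pyramid (columns of heights q 1 >= ... >= q l)\<close>

definition psum :: "(nat \<Rightarrow> nat) \<Rightarrow> nat \<Rightarrow> nat" where
  "psum q s = (\<Sum>j = 1..s. q j)"

definition Nq :: "(nat \<Rightarrow> nat) \<Rightarrow> nat \<Rightarrow> nat" where
  "Nq q l = psum q l"

definition colq :: "(nat \<Rightarrow> nat) \<Rightarrow> nat \<Rightarrow> nat" where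
  "colq q i = (LEAST s. i \<le> psum q s)"

definition rowq :: "(nat \<Rightarrow> nat) \<Rightarrow> nat \<Rightarrow> nat" where
  "rowq q i = i - psum q (colq q i - 1)"

definition has_hat :: "(nat \<Rightarrow> nat) \<Rightarrow> nat \<Rightarrow> nat \<Rightarrow> bool" where
  "has_hat q l i \<longleftrightarrow> colq q i < l \<and> rowq q i \<le> q (colq q i + 1)"

definition hat :: "(nat \<Rightarrow> nat) \<Rightarrow> nat \<Rightarrow> nat" where
  "hat q i = psum q (colq q i) + rowq q i"

definition has_tilde :: "(nat \<Rightarrow> nat) \<Rightarrow> nat \<Rightarrow> bool" where
  "has_tilde q i \<longleftrightarrow> 1 < colq q i"

definition tilde :: "(nat \<Rightarrow> nat) \<Rightarrow> nat \<Rightarrow> nat" where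
  "tilde q i = psum q (colq q i - 2) + rowq q i"

definition alpha :: "(nat \<Rightarrow> nat) \<Rightarrow> nat \<Rightarrow> complex \<Rightarrow> nat \<Rightarrow> complex" where
  "alpha q l k s = k + of_nat (Nq q l) - of_nat (q s)"

definition gamma :: "(nat \<Rightarrow> nat) \<Rightarrow> nat \<Rightarrow> complex \<Rightarrow> nat \<Rightarrow> complex" where
  "gamma q l k a = (\<Sum>u \<in> {a+1..l}. alpha q l k u)"

definition idx :: "(nat \<Rightarrow> nat) \<Rightarrow> nat \<Rightarrow> nat list" where
  "idx q l = [1..<Nq q l + 1]"

section \<open>The Lie superalgebra a = b + (odd part)\<close>

datatype gen = E nat nat | Psi nat nat

fun is_odd_gen :: "gen \<Rightarrow> bool" where
  "is_odd_gen (E i j) = False"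
| "is_odd_gen (Psi i j) = True"

fun valid_gen :: "(nat \<Rightarrow> nat) \<Rightarrow> nat \<Rightarrow> gen \<Rightarrow> bool" where
  "valid_gen q l (E i j) \<longleftrightarrow> 1 \<le> i \<and> i \<le> Nq q l \<and> 1 \<le> j \<and> j \<le> Nq q l \<and> colq q j \<le> colq q i"
| "valid_gen q l (Psi i j) \<longleftrightarrow> 1 \<le> i \<and> i \<le> Nq q l \<and> 1 \<le> j \<and> j \<le> Nq q l \<and> colq q j < colq q i"

definition dlt :: "nat \<Rightarrow> nat \<Rightarrow> complex" where
  "dlt a b = (if a = b then 1 else 0)"

fun brk :: "gen \<Rightarrow> gen \<Rightarrow> (complex \<times> gen) list" where
  "brk (E i j) (E p r) = [(dlt j p, E i r), (- dlt r i, E p j)]"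
| "brk (E i j) (Psi p r) = [(dlt j p, Psi i r), (- dlt i r, Psi p j)]"
| "brk (Psi p r) (E i j) = [(- dlt j p, Psi i r), (dlt i r, Psi p j)]"
| "brk (Psi p r) (Psi i j) = []"

fun kap :: "(nat \<Rightarrow> nat) \<Rightarrow> nat \<Rightarrow> complex \<Rightarrow> gen \<Rightarrow> gen \<Rightarrow> complex" where
  "kap q l k (E i j) (E p r) = alpha q l k (colq q i) * dlt i r * dlt p j + dlt i j * dlt p r"
| "kap q l k _ _ = 0"

section \<open>The universal affine vertex superalgebra V^kappa-tilde(a)\<close>

text \<open>A letter (x, n) stands for the mode x t^n of the affinization of a.  A word
  [g1, ..., gr] stands for the element g1 g2 ... gr of the free algebra on the modes,
  and acts on the vacuum: it represents g1 g2 ... gr |0>.  Elements are represented by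
  formal finite linear combinations of words.\<close>

type_synonym letter = "gen \<times> int"
type_synonym word = "letter list"
type_synonym lc = "(complex \<times> word) list"

definition vec_of :: "lc \<Rightarrow> word \<Rightarrow> complex" where
  "vec_of L = (\<lambda>w. sum_list (map (\<lambda>(c, u). if u = w then c else 0) L))"

definition valid_word :: "(nat \<Rightarrow> nat) \<Rightarrow> nat \<Rightarrow> word \<Rightarrow> bool" where
  "valid_word q l w \<longleftrightarrow> (\<forall>x \<in> set w. valid_gen q l (fst x))"

definition sgn_gen :: "gen \<Rightarrow> gen \<Rightarrow> complex" where
  "sgn_gen a b = (if is_odd_gen a \<and> is_odd_gen b then -1 else 1)"

text \<open>The relation  (a t^m)(b t^n) - (-1)^{|a||b|} (b t^n)(a t^m) = [a,b] t^{m+n} + m delta_{m+n,0} kappa(a,b),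
  sandwiched between words u and w.\<close>
definition rel_elt :: "(nat \<Rightarrow> nat) \<Rightarrow> nat \<Rightarrow> complex \<Rightarrow> word \<Rightarrow> letter \<Rightarrow> letter \<Rightarrow> word \<Rightarrow> lc" where
  "rel_elt q l k u x y w =
     (case x of (a, m) \<Rightarrow> case y of (b, n) \<Rightarrow>
       [(1, u @ [(a, m), (b, n)] @ w), (- sgn_gen a b, u @ [(b, n), (a, m)] @ w)]
       @ map (\<lambda>(c, g). (- c, u @ [(g, m + n)] @ w)) (brk a b)
       @ [(- (of_int m * (if m + n = 0 then 1 else 0) * kap q l k a b), u @ w)])"

text \<open>Jset is the kernel of the projection from the free algebra on the modes onto
  V = U(a-hat) / U(a-hat)(a[t] + C(K-1)): the span of the two-sided ideal of the
  supercommutation relations plus the left ideal generated by the non-negative modes.\<close>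
inductive_set Jset :: "(nat \<Rightarrow> nat) \<Rightarrow> nat \<Rightarrow> complex \<Rightarrow> (word \<Rightarrow> complex) set"
  for q :: "nat \<Rightarrow> nat" and l :: nat and k :: complex where
  J_zero: "(\<lambda>_. 0) \<in> Jset q l k"
| J_add: "x \<in> Jset q l k \<Longrightarrow> y \<in> Jset q l k \<Longrightarrow> (\<lambda>w. x w + y w) \<in> Jset q l k"
| J_smult: "x \<in> Jset q l k \<Longrightarrow> (\<lambda>w. c * x w) \<in> Jset q l k"
| J_rel: "valid_word q l u \<Longrightarrow> valid_word q l w \<Longrightarrow> valid_gen q l a \<Longrightarrow> valid_gen q l b
          \<Longrightarrow> vec_of (rel_elt q l k u (a, m) (b, n) w) \<in> Jset q l k"
| J_ann: "valid_word q l u \<Longrightarrow> valid_gen q l a \<Longrightarrow> 0 \<le> n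
          \<Longrightarrow> vec_of [(1, u @ [(a, n)])] \<in> Jset q l k"

definition zero_in_V :: "(nat \<Rightarrow> nat) \<Rightarrow> nat \<Rightarrow> complex \<Rightarrow> lc \<Rightarrow> bool" where
  "zero_in_V q l k L \<longleftrightarrow> vec_of L \<in> Jset q l k"

section \<open>n-th products (state-field correspondence via the Borcherds identity)\<close>

definition lmul :: "letter \<Rightarrow> lc \<Rightarrow> lc" where
  "lmul g L = map (\<lambda>(c, w). (c, g # w)) L"

definition scale :: "complex \<Rightarrow> lc \<Rightarrow> lc" where
  "scale c L = map (\<lambda>(d, w). (c * d, w)) L"

definition wt :: "word \<Rightarrow> int" where
  "wt w = - sum_list (map snd w)"

definition maxwt :: "lc \<Rightarrow> int" where
  "maxwt L = Max (insert 0 (set (map (\<lambda>(c, w). wt w) L)))"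

definition sgnw :: "gen \<Rightarrow> word \<Rightarrow> complex" where
  "sgnw a w = (if is_odd_gen a \<and> odd (length (filter (\<lambda>x. is_odd_gen (fst x)) w)) then -1 else 1)"

text \<open>nprod x n v computes (x|0>)_(n) v.  Recursively, using
  (a_(p) b)_(n) = sum_{j>=0} (-1)^j binom(p,j) (a_(p-j) b_(n+j) - (-1)^p (-1)^{|a||b|} b_(p+n-j) a_(j)),
  where for a = x[-1] one has a_(m) = x t^m.  The infinite sum is truncated at a bound
  beyond which all terms vanish in V for weight reasons.\<close>
fun nprod :: "word \<Rightarrow> int \<Rightarrow> lc \<Rightarrow> lc" where
  "nprod [] n v = (if n = -1 then v else [])"
| "nprod ((a, p) # w) n v =
     concat (map (\<lambda>j. scale ((-1) ^ j * ((of_int p :: complex) gchoose j))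
        (lmul (a, p - int j) (nprod w (n + int j) v)
         @ scale (- (if even p then 1 else -1) * sgnw a w) (nprod w (p + n - int j) (lmul (a, int j) v))))
       [0..<Suc (nat (maxwt v + wt w + abs n + abs p))])"

definition nprodL :: "lc \<Rightarrow> int \<Rightarrow> lc \<Rightarrow> lc" where
  "nprodL X n v = concat (map (\<lambda>(c, x). scale c (nprod x n v)) X)"

text \<open>d_0(e_ij[-1]).\<close>
definition d0_gen :: "(nat \<Rightarrow> nat) \<Rightarrow> nat \<Rightarrow> complex \<Rightarrow> nat \<Rightarrow> nat \<Rightarrow> lc" where
  "d0_gen q l k i j =
     [(1, [(E r j, -1), (Psi i r, -1)]). r \<leftarrow> idx q l, colq q r < colq q i \<and> colq q j \<le> colq q r]
     @ [(-1, [(Psi r j, -1), (E i r, -1)]). r \<leftarrow> idx q l, colq q j < colq q r \<and> colq q r \<le> colq q i]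
     @ (if colq q j < colq q i then [(alpha q l k (colq q i), [(Psi i j, -2)])] else [])
     @ (if has_hat q l i then [(1, [(Psi (hat q i) j, -1)])] else [])
     @ (if has_tilde q j then [(-1, [(Psi i (tilde q j), -1)])] else [])"

text \<open>d_0 on words in the e-modes (spanning V^kappa(b)), determined by d_0|0> = 0 and the
  derivation rule d_0(x_(p) y) = (d_0 x)_(p) y + x_(p) d_0 y for x = e_ij[-1],
  noting x_(p) = e_ij t^p.  (Words containing psi-letters never occur as arguments.)\<close>
fun d0w :: "(nat \<Rightarrow> nat) \<Rightarrow> nat \<Rightarrow> complex \<Rightarrow> word \<Rightarrow> lc" where
  "d0w q l k [] = []"
| "d0w q l k ((E i j, p) # w) = nprodL (d0_gen q l k i j) p [(1, w)] @ lmul (E i j, p) (d0w q l k w)"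
| "d0w q l k ((Psi i j, p) # w) = []"

definition d0 :: "(nat \<Rightarrow> nat) \<Rightarrow> nat \<Rightarrow> complex \<Rightarrow> lc \<Rightarrow> lc" where
  "d0 q l k L = concat (map (\<lambda>(c, w). scale c (d0w q l k w)) L)"

definition W1 :: "(nat \<Rightarrow> nat) \<Rightarrow> nat \<Rightarrow> nat \<Rightarrow> nat \<Rightarrow> lc" where
  "W1 q l p r = [(1, [(E i j, -1)]). i \<leftarrow> idx q l, j \<leftarrow> idx q l,
                   rowq q i = p \<and> rowq q j = r \<and> colq q i = colq q j]"

definition W2 :: "(nat \<Rightarrow> nat) \<Rightarrow> nat \<Rightarrow> complex \<Rightarrow> nat \<Rightarrow> nat \<Rightarrow> lc" where
  "W2 q l k p r =
     [(1, [(E i j, -1)]). i \<leftarrow> idx q l, j \<leftarrow> idx q l,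
        colq q i = colq q j + 1 \<and> rowq q i = p \<and> rowq q j = r]
   @ [(- gamma q l k (colq q i), [(E i j, -2)]). i \<leftarrow> idx q l, j \<leftarrow> idx q l,
        colq q i = colq q j \<and> rowq q i = p \<and> rowq q j = r]
   @ [(1, [(E u j, -1), (E i v, -1)]). u \<leftarrow> idx q l, j \<leftarrow> idx q l, i \<leftarrow> idx q l, v \<leftarrow> idx q l,
        colq q u = colq q j \<and> colq q j < colq q i \<and> colq q i = colq q v
        \<and> rowq q u = rowq q v \<and> rowq q v \<le> q l \<and> rowq q i = p \<and> rowq q j = r]
   @ [(-1, [(E u j, -1), (E i v, -1)]). u \<leftarrow> idx q l, j \<leftarrow> idx q l, i \<leftarrow> idx q l, v \<leftarrow> idx q l,
        colq q u = colq q j \<and> colq q i \<le> colq q j \<and> colq q i = colq q v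
        \<and> q l < rowq q v \<and> rowq q u = rowq q v \<and> rowq q i = p \<and> rowq q j = r]"

definition in_Walg :: "(nat \<Rightarrow> nat) \<Rightarrow> nat \<Rightarrow> complex \<Rightarrow> lc \<Rightarrow> bool" where
  "in_Walg q l k X \<longleftrightarrow> zero_in_V q l k (d0 q l k X)"

end

theory Submission
  imports Defs
begin


lemma vec_of_Nil[simp]: "vec_of [] w = 0" by (simp add: vec_of_def)
lemma vec_of_Cons[simp]: "vec_of ((c,u)#L) w = (if u = w then c else 0) + vec_of L w"
  by (simp add: vec_of_def)
lemma vec_of_append[simp]: "vec_of (A@B) w = vec_of A w + vec_of B w"
  by (simp add: vec_of_def)
lemma vec_of_concat: "vec_of (concat Ls) w = sum_list (map (\<lambda>L. vec_of L w) Ls)"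
  by (induction Ls) (auto simp: vec_of_def)
lemma vec_of_scale[simp]: "vec_of (scale c L) w = c * vec_of L w"
  by (induction L) (auto simp: scale_def vec_of_def algebra_simps)
lemma vec_of_if: "vec_of (if P then A else B) w = (if P then vec_of A w else vec_of B w)"
  by simp

context fixes q :: "nat \<Rightarrow> nat" and l :: nat and k :: complex begin

lemma J_sum_list: "(\<And>a. a \<in> set xs \<Longrightarrow> f a \<in> Jset q l k) \<Longrightarrow> (\<lambda>w. sum_list (map (\<lambda>a. f a w) xs)) \<in> Jset q l k"
proof (induction xs)
  case Nil then show ?case using Jset.J_zero by simp
next
  case (Cons a xs)
  have "(\<lambda>w. f a w + sum_list (map (\<lambda>a. f a w) xs)) \<in> Jset q l k"
    using Cons by (intro Jset.J_add) auto
  then show ?case by simp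
qed

lemma J_smult': "x \<in> Jset q l k \<Longrightarrow> (\<lambda>w. c * x w) \<in> Jset q l k" by (rule Jset.J_smult)

lemma J_diff: "x \<in> Jset q l k \<Longrightarrow> y \<in> Jset q l k \<Longrightarrow> (\<lambda>w. x w - y w) \<in> Jset q l k"
proof -
  assume a: "x \<in> Jset q l k" "y \<in> Jset q l k"
  have "(\<lambda>w. x w + (\<lambda>w. (-1) * y w) w) \<in> Jset q l k"
    using a by (intro Jset.J_add Jset.J_smult)
  then show ?thesis by simp
qed

lemma J_eq: "x \<in> Jset q l k \<Longrightarrow> (\<And>w. y w = x w) \<Longrightarrow> y \<in> Jset q l k"
proof -
  assume "x \<in> Jset q l k" "\<And>w. y w = x w"
  then show ?thesis by (metis ext)
qed

lemma J_ann_vec: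
  assumes "\<forall>(c,w)\<in>set L. \<exists>u g m. w = u @ [(g,m)] \<and> valid_word q l u \<and> valid_gen q l g \<and> 0 \<le> m"
  shows "vec_of L \<in> Jset q l k"
  using assms
proof (induction L)
  case Nil then show ?case using Jset.J_zero by (simp add: vec_of_def)
next
  case (Cons a L)
  obtain c w where a: "a = (c,w)" by force
  from Cons.prems a obtain u g m where w: "w = u @ [(g,m)]" "valid_word q l u" "valid_gen q l g" "0 \<le> m" by auto
  have h: "vec_of [(1, u @ [(g, m)])] \<in> Jset q l k" using w by (intro Jset.J_ann)
  have "(\<lambda>x. c * vec_of [(1, w)] x) \<in> Jset q l k" unfolding w(1) by (rule Jset.J_smult[OF h])
  then have h2: "(\<lambda>x. (\<lambda>x. c * vec_of [(1, w)] x) x + vec_of L x) \<in> Jset q l k"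
    using Cons by (intro Jset.J_add) auto
  show ?case using a by (intro J_eq[OF h2]) (simp add: vec_of_def)
qed

end

lemma vec_of_Cons_minus: "vec_of ((c,u)#L) w - vec_of [(c,u)] w = vec_of L w"
  by simp


lemma two_letter_ann: "valid_gen q l a \<Longrightarrow> valid_gen q l g \<Longrightarrow> 0 \<le> m \<Longrightarrow>
  \<exists>u g' m'. [(a,n),(g,m)] = u@[(g',m')] \<and> valid_word q l u \<and> valid_gen q l g' \<and> 0 \<le> m'"
  by (intro exI[of _ "[(a,n)]"]) (simp add: valid_word_def)


lemma nprod_double:
  "nprod [(a,-1),(b,-1)] (-1) [(1,[])] = (1,[(a,-1),(b,-1)]) # 
     [(sgn_gen a b, [(b, - 2), (a, 0)]),
        (1, [(a, - 2), (b, 0)]), (sgn_gen a b, [(b, - 3), (a, 1)]),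
        (1, [(a, - 3), (b, 1)]), (sgn_gen a b, [(b, - 4), (a, 2)]),
        (1, [(a, - 4), (b, 2)]), (sgn_gen a b, [(b, - 5), (a, 3)])]"
  by (simp add: maxwt_def wt_def lmul_def scale_def sgnw_def upt_rec gbinomial_Suc sgn_gen_def)

lemma nprod_double_J:
  assumes "valid_gen q l a" "valid_gen q l b"
  shows "(\<lambda>w. vec_of (nprod [(a,-1),(b,-1)] (-1) [(1,[])]) w - vec_of [(1,[(a,-1),(b,-1)])] w) \<in> Jset q l k"
proof -
  let ?L = "[(sgn_gen a b, [(b, - 2), (a, 0)]),
        (1, [(a, - 2), (b, 0)]), (sgn_gen a b, [(b, - 3), (a, 1)]),
        (1, [(a, - 3), (b, 1)]), (sgn_gen a b, [(b, - 4), (a, 2)]),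
        (1, [(a, - 4), (b, 2)]), (sgn_gen a b, [(b, - 5), (a, 3)])] :: lc"
  have "vec_of ?L \<in> Jset q l k"
    apply (rule J_ann_vec)
    using assms by (simp add: two_letter_ann valid_word_def)
  then show ?thesis
    by (rule J_eq) (simp only: nprod_double vec_of_Cons_minus)
qed


definition pos :: "(nat \<Rightarrow> nat) \<Rightarrow> nat \<Rightarrow> nat \<Rightarrow> nat" where
  "pos q c s = psum q (c - 1) + s"

lemma psum_0[simp]: "psum q 0 = 0" by (simp add: psum_def)
lemma psum_Suc[simp]: "psum q (Suc n) = psum q n + q (Suc n)" by (simp add: psum_def)
lemma psum_mono: "m \<le> n \<Longrightarrow> psum q m \<le> psum q n"
  by (induction n) (auto simp: le_Suc_eq)
lemma psum_pred: "1 \<le> c \<Longrightarrow> psum q c = psum q (c - 1) + q c"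
  by (cases c) auto

lemma colq_pos[simp]: assumes "1 \<le> c" "1 \<le> s" "s \<le> q c" shows "colq q (pos q c s) = c"
  unfolding colq_def
proof (rule Least_equality)
  show "pos q c s \<le> psum q c" using assms psum_pred[of c q] by (simp add: pos_def)
next
  fix y assume y: "pos q c s \<le> psum q y"
  show "c \<le> y"
  proof (rule ccontr)
    assume "\<not> c \<le> y"
    then have "psum q y \<le> psum q (c - 1)" by (intro psum_mono) auto
    then show False using y assms by (simp add: pos_def)
  qed
qed

lemma rowq_pos[simp]: assumes "1 \<le> c" "1 \<le> s" "s \<le> q c" shows "rowq q (pos q c s) = s"
proof -
  have h: "colq q (pos q c s) = c" using assms by (rule colq_pos)
  show ?thesis unfolding rowq_def h by (simp add: pos_def)
qed

lemma pos_bounds: assumes "1 \<le> c" "c \<le> l" "1 \<le> s" "s \<le> q c"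
  shows "1 \<le> pos q c s" "pos q c s \<le> Nq q l"
proof -
  show "1 \<le> pos q c s" using assms by (simp add: pos_def)
  have "pos q c s \<le> psum q c" using assms psum_pred[of c q] by (simp add: pos_def)
  also have "\<dots> \<le> psum q l" using assms by (intro psum_mono)
  finally show "pos q c s \<le> Nq q l" by (simp add: Nq_def)
qed

lemma colq_props: assumes "1 \<le> i" "i \<le> Nq q l"
  shows "1 \<le> colq q i" "colq q i \<le> l" "1 \<le> rowq q i" "rowq q i \<le> q (colq q i)"
    "pos q (colq q i) (rowq q i) = i"
proof -
  let ?c = "colq q i"
  have ex: "i \<le> psum q l" using assms by (simp add: Nq_def)
  have c1: "i \<le> psum q ?c" unfolding colq_def by (rule LeastI[of _ l]) (rule ex)
  show cl: "?c \<le> l" unfolding colq_def by (rule Least_le) (rule ex)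
  show c0: "1 \<le> ?c"
  proof (rule ccontr)
    assume "\<not> 1 \<le> ?c" then have "?c = 0" by simp
    then show False using c1 assms by simp
  qed
  have c2: "\<not> i \<le> psum q (?c - 1)" unfolding colq_def
    by (rule not_less_Least) (use c0 in \<open>simp add: colq_def\<close>)
  show "1 \<le> rowq q i" using c2 by (simp add: rowq_def)
  show "rowq q i \<le> q ?c" using c1 c2 psum_pred[OF c0, of q] by (simp add: rowq_def)
  show "pos q ?c (rowq q i) = i" using c2 by (simp add: rowq_def pos_def)
qed

definition cells :: "(nat \<Rightarrow> nat) \<Rightarrow> nat \<Rightarrow> (nat \<times> nat) set" where
  "cells q l = (SIGMA c:{1..l}. {1..q c})"

lemma bij_cells: "bij_betw (\<lambda>(c,s). pos q c s) (cells q l) {1..Nq q l}"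
proof (rule bij_betw_byWitness[where f' = "\<lambda>i. (colq q i, rowq q i)"])
  show "\<forall>a\<in>cells q l. (\<lambda>i. (colq q i, rowq q i)) ((\<lambda>(c, s). pos q c s) a) = a"
  proof
    fix a assume "a \<in> cells q l"
    then obtain c s where cs0: "a = (c,s)" "c \<in> {1..l}" "s \<in> {1..q c}"
      unfolding cells_def by (cases a) auto
    then have cs: "a = (c,s)" "1 \<le> c" "c \<le> l" "1 \<le> s" "s \<le> q c" by auto
    show "(\<lambda>i. (colq q i, rowq q i)) ((\<lambda>(c, s). pos q c s) a) = a"
      using cs by (simp add: colq_pos[of c s q, OF cs(2) cs(4) cs(5)] rowq_pos[of c s q, OF cs(2) cs(4) cs(5)])
  qed
  show "\<forall>a'\<in>{1..Nq q l}. (\<lambda>(c, s). pos q c s) (colq q a', rowq q a') = a'"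
  proof
    fix i assume "i \<in> {1..Nq q l}"
    then have "1 \<le> i" "i \<le> Nq q l" by auto
    from colq_props(5)[OF this] show "(\<lambda>(c, s). pos q c s) (colq q i, rowq q i) = i" by simp
  qed
  show "(\<lambda>(c, s). pos q c s) ` cells q l \<subseteq> {1..Nq q l}"
  proof
    fix x assume "x \<in> (\<lambda>(c, s). pos q c s) ` cells q l"
    then obtain c s where cs0: "x = pos q c s" "c \<in> {1..l}" "s \<in> {1..q c}"
      unfolding cells_def by auto
    then have cs: "x = pos q c s" "1 \<le> c" "c \<le> l" "1 \<le> s" "s \<le> q c" by auto
    show "x \<in> {1..Nq q l}" using pos_bounds[of c l s q, OF cs(2-5)] cs(1) by simp
  qed
  show "(\<lambda>i. (colq q i, rowq q i)) ` {1..Nq q l} \<subseteq> cells q l"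
  proof
    fix x assume "x \<in> (\<lambda>i. (colq q i, rowq q i)) ` {1..Nq q l}"
    then obtain i where i: "x = (colq q i, rowq q i)" "1 \<le> i" "i \<le> Nq q l" by auto
    show "x \<in> cells q l" using colq_props[OF i(2,3)] i(1) unfolding cells_def by auto
  qed
qed

lemma idx_sum: "sum_list (map F (idx q l)) = (\<Sum>c=1..l. \<Sum>s=1..q c. F (pos q c s))"
proof -
  have "sum_list (map F (idx q l)) = sum F (set [1..<Nq q l + 1])"
    unfolding idx_def by (rule sum_set_upt_conv_sum_list_nat[symmetric])
  also have "set [1..<Nq q l + 1] = {1..Nq q l}" by auto
  finally have "sum_list (map F (idx q l)) = sum F {1..Nq q l}" .
  also have "\<dots> = (\<Sum>x\<in>cells q l. F ((\<lambda>(c,s). pos q c s) x))"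
    by (rule sum.reindex_bij_betw[OF bij_cells, symmetric])
  also have "\<dots> = (\<Sum>c=1..l. \<Sum>s=1..q c. F (pos q c s))"
    unfolding cells_def by (simp add: sum.Sigma split_def)
  finally show ?thesis .
qed

lemma hat_pos[simp]: "1 \<le> c \<Longrightarrow> 1 \<le> s \<Longrightarrow> s \<le> q c \<Longrightarrow> hat q (pos q c s) = pos q (c+1) s"
proof -
  assume a: "1 \<le> c" "1 \<le> s" "s \<le> q c"
  have h1: "colq q (pos q c s) = c" using a by (rule colq_pos)
  have h2: "rowq q (pos q c s) = s" using a by (rule rowq_pos)
  show ?thesis unfolding hat_def h1 h2 by (simp add: pos_def)
qed
lemma tilde_pos[simp]: "2 \<le> c \<Longrightarrow> 1 \<le> s \<Longrightarrow> s \<le> q c \<Longrightarrow> tilde q (pos q c s) = pos q (c-1) s"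
proof -
  assume a: "2 \<le> c" "1 \<le> s" "s \<le> q c"
  then have a': "1 \<le> c" by simp
  have h1: "colq q (pos q c s) = c" using a' a(2,3) by (rule colq_pos)
  have h2: "rowq q (pos q c s) = s" using a' a(2,3) by (rule rowq_pos)
  show ?thesis unfolding tilde_def h1 h2 by (simp add: pos_def numeral_2_eq_2)
qed
lemma has_hat_pos[simp]: "1 \<le> c \<Longrightarrow> 1 \<le> s \<Longrightarrow> s \<le> q c \<Longrightarrow> has_hat q l (pos q c s) \<longleftrightarrow> c < l \<and> s \<le> q (c+1)"
proof -
  assume a: "1 \<le> c" "1 \<le> s" "s \<le> q c"
  have h1: "colq q (pos q c s) = c" using a by (rule colq_pos)
  have h2: "rowq q (pos q c s) = s" using a by (rule rowq_pos)
  show ?thesis unfolding has_hat_def h1 h2 by simp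
qed
lemma has_tilde_pos[simp]: "1 \<le> c \<Longrightarrow> 1 \<le> s \<Longrightarrow> s \<le> q c \<Longrightarrow> has_tilde q (pos q c s) \<longleftrightarrow> 1 < c"
proof -
  assume a: "1 \<le> c" "1 \<le> s" "s \<le> q c"
  have h1: "colq q (pos q c s) = c" using a by (rule colq_pos)
  show ?thesis unfolding has_tilde_def h1 by simp
qed


lemma nprod_1_1: "nprod [(g,-1)] (-1) [(1,[])] = [(1,[(g,-1)])]"
  by (simp add: maxwt_def wt_def lmul_def scale_def sgnw_def upt_rec gbinomial_Suc)
lemma nprod_1_2: "nprod [(g,-1)] (-2) [(1,[])] = [(1,[(g,-2)])]"
  by (simp add: maxwt_def wt_def lmul_def scale_def sgnw_def upt_rec gbinomial_Suc)
lemma nprod_2_1: "nprod [(g,-2)] (-1) [(1,[])] = [(1,[(g,-2)])]"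
  by (simp add: maxwt_def wt_def lmul_def scale_def sgnw_def upt_rec gbinomial_Suc)
lemma nprod_1_1e: "nprod [(g,-1)] (-1) [(1,[(e,-1)])] = [(1,[(g,-1),(e,-1)])]"
  by (simp add: maxwt_def wt_def lmul_def scale_def sgnw_def upt_rec gbinomial_Suc)

lemma nprodL_append[simp]: "nprodL (A@B) n v = nprodL A n v @ nprodL B n v"
  by (simp add: nprodL_def)
lemma vec_of_nprodL: "vec_of (nprodL X n v) w = sum_list (map (\<lambda>(c,x). c * vec_of (nprod x n v) w) X)"
  by (induction X) (auto simp: nprodL_def)

lemma vec_of_d0: "vec_of (d0 q l k L) w = sum_list (map (\<lambda>(c,u). c * vec_of (d0w q l k u) w) L)"
  by (induction L) (auto simp: d0_def)

lemma d0_gen_diag: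
  assumes "colq q i = colq q j"
  shows "d0_gen q l k i j = (if has_hat q l i then [(1, [(Psi (hat q i) j, -1)])] else [])
     @ (if has_tilde q j then [(-1, [(Psi i (tilde q j), -1)])] else [])"
  using assms by (auto simp: d0_gen_def)


lemma idx_sum_cong:
  assumes "\<And>c s. 1 \<le> c \<Longrightarrow> c \<le> l \<Longrightarrow> 1 \<le> s \<Longrightarrow> s \<le> q c \<Longrightarrow> F (pos q c s) = G c s"
  shows "sum_list (map F (idx q l)) = (\<Sum>c=1..l. \<Sum>s=1..q c. G c s)"
  unfolding idx_sum by (intro sum.cong refl) (use assms in auto)

lemma sum_delta_nat: "(\<Sum>s::nat=a..b. if s = p then f s else 0) = (if a \<le> p \<and> p \<le> b then f p else (0::'a::comm_monoid_add))"
  by (simp add: sum.delta)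

lemma sum_list_concat': "sum_list (concat xss) = sum_list (map sum_list xss)"
  by (induction xss) auto

lemma sum_list_map_if1[simp]: "sum_list (map f (if P then [x] else [])) = (if P then f x else 0)"
  by simp

lemma comp2_sum:
  "sum_list (map (\<lambda>(c,u). c * F u) [(c0 i j, w i j). i \<leftarrow> xs, j \<leftarrow> ys, P i j])
   = sum_list (map (\<lambda>i. sum_list (map (\<lambda>j. if P i j then c0 i j * F (w i j) else 0) ys)) xs)"
  by (induction xs) (simp_all add: sum_list_concat' map_concat comp_def cong: if_cong)


lemma sum_delta_conj: "(\<Sum>s::nat=a..b. if s = p \<and> Q then f s else 0) = (if a \<le> p \<and> p \<le> b \<and> Q then f p else (0::'a::comm_monoid_add))"
proof -
  have "(\<Sum>s::nat=a..b. if s = p \<and> Q then f s else 0) = (\<Sum>s::nat=a..b. if s = p then (if Q then f s else 0) else 0)"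
    by (intro sum.cong) auto
  also have "\<dots> = (if a \<le> p \<and> p \<le> b then (if Q then f p else 0) else 0)" by (subst sum.delta) auto
  finally show ?thesis by simp
qed

lemma double_idx_diag:
  assumes "1 \<le> p" "1 \<le> r"
  shows "sum_list (map (\<lambda>i. sum_list (map (\<lambda>j. if rowq q i = p \<and> rowq q j = r \<and> colq q i = colq q j then V i j else 0) (idx q l))) (idx q l))
    = (\<Sum>c=1..l. if p \<le> q c \<and> r \<le> q c then V (pos q c p) (pos q c r) else (0::'a::comm_monoid_add))"
proof -
  have "sum_list (map (\<lambda>i. sum_list (map (\<lambda>j. if rowq q i = p \<and> rowq q j = r \<and> colq q i = colq q j then V i j else 0) (idx q l))) (idx q l))
     = (\<Sum>c=1..l. \<Sum>s=1..q c. if s = p \<and> r \<le> q c then V (pos q c s) (pos q c r) else 0)"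
  proof (rule idx_sum_cong)
    fix c s assume cs: "1 \<le> c" "c \<le> l" "1 \<le> s" "s \<le> q c"
    have "sum_list (map (\<lambda>j. if rowq q (pos q c s) = p \<and> rowq q j = r \<and> colq q (pos q c s) = colq q j then V (pos q c s) j else 0) (idx q l))
      = (\<Sum>c'=1..l. \<Sum>s'=1..q c'. if s' = r \<and> (s = p \<and> c = c') then V (pos q c s) (pos q c' s') else 0)"
      by (rule idx_sum_cong) (use cs in auto)
    also have "\<dots> = (\<Sum>c'=1..l. if c' = c \<and> (s = p \<and> r \<le> q c) then V (pos q c s) (pos q c r) else 0)"
      by (intro sum.cong refl) (subst sum_delta_conj, use assms in auto)
    also have "\<dots> = (if s = p \<and> r \<le> q c then V (pos q c s) (pos q c r) else 0)"
      by (subst sum_delta_conj) (use cs in auto)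
    finally show "sum_list (map (\<lambda>j. if rowq q (pos q c s) = p \<and> rowq q j = r \<and> colq q (pos q c s) = colq q j then V (pos q c s) j else 0) (idx q l))
      = (if s = p \<and> r \<le> q c then V (pos q c s) (pos q c r) else 0)" .
  qed
  also have "\<dots> = (\<Sum>c=1..l. if p \<le> q c \<and> r \<le> q c then V (pos q c p) (pos q c r) else 0)"
    by (intro sum.cong refl) (subst sum_delta_conj, use assms in auto)
  finally show ?thesis .
qed

lemma d0w_diag:
  assumes "colq q i = colq q j"
  shows "vec_of (d0w q l k [(E i j,-1)]) x =
    (if has_hat q l i then (if [(Psi (hat q i) j, -1)] = x then 1 else 0) else 0)
    - (if has_tilde q j then (if [(Psi i (tilde q j), -1)] = x then 1 else 0) else 0)"
  by (simp add: d0_gen_diag[OF assms] vec_of_nprodL nprod_1_1 lmul_def del: nprod.simps)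


lemma q_mono:
  fixes q :: "nat \<Rightarrow> nat"
  assumes "\<forall>s. 1 \<le> s \<and> s < l \<longrightarrow> q (Suc s) \<le> q s"
  shows "1 \<le> a \<Longrightarrow> a \<le> b \<Longrightarrow> b \<le> l \<Longrightarrow> q b \<le> q a"
proof (induction b)
  case 0 then show ?case by simp
next
  case (Suc b)
  show ?case
  proof (cases "a = Suc b")
    case True then show ?thesis by (simp add: True)
  next
    case False
    then have "a \<le> b" using Suc by simp
    then have "q b \<le> q a" using Suc by simp
    moreover have "q (Suc b) \<le> q b" using assms Suc \<open>a \<le> b\<close> by auto
    ultimately show ?thesis by simp
  qed
qed

lemma tele_shift: "(\<Sum>c=1..(l::nat). if 1 < c then g (c - 1) else 0) = (\<Sum>c\<in>{1..<l}. g c :: 'a::comm_monoid_add)"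
proof (induction l)
  case 0 then show ?case by simp
next
  case (Suc l)
  show ?case
  proof (cases "l = 0")
    case True then show ?thesis by simp
  next
    case False
    have "(\<Sum>c=1..Suc l. if 1 < c then g (c - 1) else 0) = (\<Sum>c=1..l. if 1 < c then g (c - 1) else 0) + g l"
      using False by (simp add: sum.cl_ivl_Suc)
    also have "\<dots> = (\<Sum>c\<in>{1..<l}. g c) + g l" using Suc by simp
    also have "\<dots> = (\<Sum>c\<in>{1..<Suc l}. g c)" using False by (simp add: sum.op_ivl_Suc)
    finally show ?thesis .
  qed
qed

lemma lt_restrict: "(\<Sum>c=1..(l::nat). if c < l then h c else 0) = (\<Sum>c\<in>{1..<l}. h c :: 'a::comm_monoid_add)"
proof -
  have "(\<Sum>c=1..l. if c < l then h c else 0) = (\<Sum>c\<in>{1..l} \<inter> {c. c < l}. h c)"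
    by (simp add: sum.inter_restrict)
  also have "{1..l} \<inter> {c. c < l} = {1..<l}" by auto
  finally show ?thesis .
qed

definition dl :: "word \<Rightarrow> word \<Rightarrow> complex" where "dl w x = (if w = x then 1 else 0)"

lemma d0w_diag':
  assumes "colq q i = colq q j"
  shows "vec_of (d0w q l k [(E i j,-1)]) x =
    (if has_hat q l i then dl [(Psi (hat q i) j, -1)] x else 0)
    - (if has_tilde q j then dl [(Psi i (tilde q j), -1)] x else 0)"
  unfolding d0w_diag[OF assms] dl_def by simp

lemma W1_zero:
  assumes l1: "1 \<le> l"
    and mono: "\<forall>s. 1 \<le> s \<and> s < l \<longrightarrow> q (Suc s) \<le> q s"
    and pos1: "\<forall>s. 1 \<le> s \<and> s \<le> l \<longrightarrow> 1 \<le> q s"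
    and pr: "(1 \<le> p \<and> p \<le> q l \<and> 1 \<le> r \<and> r \<le> q l) \<or> (q l < p \<and> p = r \<and> p \<le> q 1)"
  shows "vec_of (d0 q l k (W1 q l p r)) x = 0"
proof -
  have p1: "1 \<le> p" and r1: "1 \<le> r" using pr pos1 l1 by auto
  define f where "f c = dl [(Psi (pos q (c+1) p) (pos q c r), -1)] x" for c
  define A where "A c \<longleftrightarrow> p \<le> q c \<and> r \<le> q c" for c
  have "vec_of (d0 q l k (W1 q l p r)) x =
    sum_list (map (\<lambda>i. sum_list (map (\<lambda>j. if rowq q i = p \<and> rowq q j = r \<and> colq q i = colq q j
       then (if has_hat q l i then dl [(Psi (hat q i) j, -1)] x else 0)
          - (if has_tilde q j then dl [(Psi i (tilde q j), -1)] x else 0) else 0) (idx q l))) (idx q l))"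
    unfolding vec_of_d0 W1_def comp2_sum
    by (simp add: d0w_diag' del: d0w.simps cong: if_cong)
  also have "\<dots> = (\<Sum>c=1..l. if A c then
       (if has_hat q l (pos q c p) then dl [(Psi (hat q (pos q c p)) (pos q c r), -1)] x else 0)
          - (if has_tilde q (pos q c r) then dl [(Psi (pos q c p) (tilde q (pos q c r)), -1)] x else 0) else 0)"
    unfolding A_def by (rule double_idx_diag[OF p1 r1])
  also have "\<dots> = (\<Sum>c=1..l. (if c < l then (if A c \<and> p \<le> q (c+1) then f c else 0) else 0)
        - (if 1 < c then (if A (c - 1 + 1) then f (c - 1) else 0) else 0))"
  proof (intro sum.cong refl)
    fix c assume c: "c \<in> {1..l}"
    show "(if A c then
       (if has_hat q l (pos q c p) then dl [(Psi (hat q (pos q c p)) (pos q c r), -1)] x else 0)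
          - (if has_tilde q (pos q c r) then dl [(Psi (pos q c p) (tilde q (pos q c r)), -1)] x else 0) else 0)
      = (if c < l then (if A c \<and> p \<le> q (c+1) then f c else 0) else 0)
        - (if 1 < c then (if A (c - 1 + 1) then f (c - 1) else 0) else 0)"
      using c p1 r1 by (auto simp: A_def f_def)
  qed
  also have "\<dots> = 0"
  proof -
    have eq: "\<And>c. c \<in> {1..<l} \<Longrightarrow> (A c \<and> p \<le> q (c+1)) = A (c+1)"
    proof -
      fix c assume c: "c \<in> {1..<l}"
      have qc: "q (c+1) \<le> q c" using mono c by auto
      have ql: "q l \<le> q (c+1)" using q_mono[OF mono, of "c+1" l] c by auto
      show "(A c \<and> p \<le> q (c+1)) = A (c+1)" using pr qc ql unfolding A_def by auto
    qed
    have "(\<Sum>c=1..l. (if c < l then (if A c \<and> p \<le> q (c+1) then f c else 0) else 0)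
        - (if 1 < c then (if A (c - 1 + 1) then f (c - 1) else 0) else 0))
      = (\<Sum>c=1..l. (if c < l then (if A c \<and> p \<le> q (c+1) then f c else 0) else 0))
        - (\<Sum>c=1..l. (if 1 < c then (if A (c - 1 + 1) then f (c - 1) else 0) else 0))"
      by (simp add: sum_subtractf)
    also have "\<dots> = (\<Sum>c\<in>{1..<l}. (if A c \<and> p \<le> q (c+1) then f c else 0))
        - (\<Sum>c\<in>{1..<l}. (if A (c+1) then f c else 0))"
      by (simp only: lt_restrict tele_shift[where g = "\<lambda>c. if A (c+1) then f c else 0"])
    also have "\<dots> = 0"
    proof -
      have "(\<Sum>c\<in>{1..<l}. (if A c \<and> p \<le> q (c+1) then f c else 0)) = (\<Sum>c\<in>{1..<l}. (if A (c+1) then f c else 0))"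
        by (rule sum.cong[OF refl]) (simp only: eq)
      then show ?thesis by simp
    qed
    finally show ?thesis .
  qed
  finally show ?thesis .
qed


lemma nprodL_if: "nprodL (if P then A else B) n v = (if P then nprodL A n v else nprodL B n v)" by simp
lemma nprodL_single: "nprodL [(c,x)] n v = scale c (nprod x n v)" by (simp add: nprodL_def)
lemma map_if_list: "map f (if P then A else B) = (if P then map f A else map f B)" by simp

lemma d0w_diag2:
  assumes "colq q i = colq q j"
  shows "vec_of (d0w q l k [(E i j,-2)]) x =
    (if has_hat q l i then dl [(Psi (hat q i) j, -2)] x else 0)
    - (if has_tilde q j then dl [(Psi i (tilde q j), -2)] x else 0)"
  by (simp add: d0_gen_diag[OF assms] vec_of_nprodL nprod_1_2 lmul_def dl_def del: nprod.simps)

lemma d0w_pair_list: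
  assumes "colq q u = colq q j" "colq q i = colq q v"
  shows "d0w q l k [(E u j,-1),(E i v,-1)] =
    (if has_hat q l u then [(1, [(Psi (hat q u) j, -1),(E i v,-1)])] else [])
    @ (if has_tilde q j then [(-1, [(Psi u (tilde q j), -1),(E i v,-1)])] else [])
    @ (if has_hat q l i then [(1, [(E u j,-1),(Psi (hat q i) v, -1)])] else [])
    @ (if has_tilde q v then [(-1, [(E u j,-1),(Psi i (tilde q v), -1)])] else [])"
  by (cases "has_hat q l u"; cases "has_tilde q j"; cases "has_hat q l i"; cases "has_tilde q v")
     (simp_all add: d0_gen_diag[OF assms(1)] d0_gen_diag[OF assms(2)] nprodL_def scale_def nprod_1_1 nprod_1_1e
        lmul_def del: nprod.simps)

lemma d0w_pair:
  assumes "colq q u = colq q j" "colq q i = colq q v"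
  shows "vec_of (d0w q l k [(E u j,-1),(E i v,-1)]) x =
    (if has_hat q l u then dl [(Psi (hat q u) j, -1),(E i v,-1)] x else 0)
    - (if has_tilde q j then dl [(Psi u (tilde q j), -1),(E i v,-1)] x else 0)
    + (if has_hat q l i then dl [(E u j,-1),(Psi (hat q i) v, -1)] x else 0)
    - (if has_tilde q v then dl [(E u j,-1),(Psi i (tilde q v), -1)] x else 0)"
  unfolding d0w_pair_list[OF assms] by (simp add: dl_def)

lemma vec_of_as_sum: "vec_of L x = sum_list (map (\<lambda>(c,y). c * vec_of [(1,y)] x) L)"
  by (induction L) (auto simp: vec_of_def)

lemma d0w_single:
  "vec_of (d0w q l k [(E i j,-1)]) x = sum_list (map (\<lambda>(c,y). c * vec_of (nprod y (-1) [(1,[])]) x) (d0_gen q l k i j))"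
  by (simp add: vec_of_nprodL lmul_def del: nprod.simps)

lemma idx_mem: "r \<in> set (idx q l) \<longleftrightarrow> 1 \<le> r \<and> r \<le> Nq q l"
  by (auto simp: idx_def)

lemma d0w_single_J:
  assumes ij: "1 \<le> i" "i \<le> Nq q l" "1 \<le> j" "j \<le> Nq q l"
  shows "(\<lambda>x. vec_of (d0w q l k [(E i j,-1)]) x - vec_of (d0_gen q l k i j) x) \<in> Jset q l k"
proof -
  have each: "(\<lambda>x. vec_of (nprod y (-1) [(1,[])]) x - vec_of [(1,y)] x) \<in> Jset q l k"
    if mem: "(c,y) \<in> set (d0_gen q l k i j)" for c y
  proof -
    from mem consider
      (a) r where "r \<in> set (idx q l)" "colq q r < colq q i" "colq q j \<le> colq q r" "y = [(E r j,-1),(Psi i r,-1)]"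
    | (b) r where "r \<in> set (idx q l)" "colq q j < colq q r" "colq q r \<le> colq q i" "y = [(Psi r j,-1),(E i r,-1)]"
    | (c) g where "y = [(g,-2)]"
    | (d) g where "y = [(g,-1)]"
      unfolding d0_gen_def by (auto split: if_splits)
    then show ?thesis
    proof cases
      case a
      have "valid_gen q l (E r j)" "valid_gen q l (Psi i r)" using a ij by (auto simp: idx_mem)
      then show ?thesis using a(4) by (simp only: nprod_double_J)
    next
      case b
      have "valid_gen q l (Psi r j)" "valid_gen q l (E i r)" using b ij by (auto simp: idx_mem)
      then show ?thesis using b(4) by (simp only: nprod_double_J)
    next
      case c
      then show ?thesis using Jset.J_zero by (simp add: nprod_2_1 del: nprod.simps)
    next
      case d
      then show ?thesis using Jset.J_zero by (simp add: nprod_1_1 del: nprod.simps)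
    qed
  qed
  have "(\<lambda>x. sum_list (map (\<lambda>a. (\<lambda>(c,y). (\<lambda>x. c * (vec_of (nprod y (-1) [(1,[])]) x - vec_of [(1,y)] x))) a x) (d0_gen q l k i j))) \<in> Jset q l k"
    by (rule J_sum_list) (use each in \<open>auto intro: Jset.J_smult\<close>)
  then show ?thesis
    by (rule J_eq) (simp add: d0w_single vec_of_as_sum[of "d0_gen q l k i j"] sum_list_subtractf split_def algebra_simps del: nprod.simps d0w.simps)
qed


lemma colq_pos'[simp]: "0 < c \<Longrightarrow> 0 < s \<Longrightarrow> s \<le> q c \<Longrightarrow> colq q (pos q c s) = c" by simp
lemma rowq_pos'[simp]: "0 < c \<Longrightarrow> 0 < s \<Longrightarrow> s \<le> q c \<Longrightarrow> rowq q (pos q c s) = s" by simp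
lemma if_conj_0: "(if A \<and> B then X else (0::'a::zero)) = (if A then (if B then X else 0) else 0)" by simp
lemma sum_if_const: "(\<Sum>x\<in>S. if P then f x else (0::'a::comm_monoid_add)) = (if P then (\<Sum>x\<in>S. f x) else 0)" by simp

lemma comp4_sum:
  "sum_list (map (\<lambda>(c,u). c * F u) [(c0 a b d e, w a b d e). a \<leftarrow> xs, b \<leftarrow> ys, d \<leftarrow> zs, e \<leftarrow> ts, P a b d e])
   = sum_list (map (\<lambda>a. sum_list (map (\<lambda>b. sum_list (map (\<lambda>d. sum_list (map (\<lambda>e.
        if P a b d e then c0 a b d e * F (w a b d e) else 0) ts)) zs)) ys)) xs)"
  by (simp add: sum_list_concat' map_concat comp_def cong: if_cong)

lemma vec_of_comp1: "vec_of [(a r, w r). r \<leftarrow> xs, P r] x = sum_list (map (\<lambda>r. if P r then a r * dl (w r) x else 0) xs)"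
  by (induction xs) (auto simp: vec_of_def dl_def)

lemma quad_idx:
  fixes F :: "nat \<Rightarrow> nat \<Rightarrow> nat \<Rightarrow> nat \<Rightarrow> complex"
  assumes "1 \<le> p" "1 \<le> r" "\<And>c. 0 < c \<Longrightarrow> c \<le> l \<Longrightarrow> p \<le> q c" "\<And>c. 0 < c \<Longrightarrow> c \<le> l \<Longrightarrow> r \<le> q c"
  shows "sum_list (map (\<lambda>u. sum_list (map (\<lambda>j. sum_list (map (\<lambda>i. sum_list (map (\<lambda>v.
   if colq q u = colq q j \<and> rowq q j = r \<and> S (rowq q u) \<and> R (colq q j) (colq q i) \<and> rowq q i = p \<and> colq q i = colq q v
        \<and> rowq q u = rowq q v then F u j i v else 0)
   (idx q l))) (idx q l))) (idx q l))) (idx q l))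
   = (\<Sum>c=1..l. \<Sum>s=1..q c. if S s then (\<Sum>ca=1..l. if R c ca then (if s \<le> q ca then F (pos q c s) (pos q c r) (pos q ca p) (pos q ca s) else 0) else 0) else 0)"
  apply (simp only: idx_sum)
  apply (simp add: if_conj_0 sum_if_const assms assms(1,2)[unfolded One_nat_def] cong: if_cong)
  done


lemma idx_col_sum:
  assumes c: "1 \<le> c" "c \<le> l" and P: "\<And>c' s. 1 \<le> c' \<Longrightarrow> c' \<le> l \<Longrightarrow> 1 \<le> s \<Longrightarrow> s \<le> q c' \<Longrightarrow> P (pos q c' s) \<longleftrightarrow> c' = c"
  shows "sum_list (map (\<lambda>r'. if P r' then f r' else (0::complex)) (idx q l)) = (\<Sum>s=1..q c. f (pos q c s))"
proof -
  have "sum_list (map (\<lambda>r'. if P r' then f r' else (0::complex)) (idx q l)) = (\<Sum>c'=1..l. \<Sum>s=1..q c'. if c' = c then f (pos q c' s) else 0)"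
    by (rule idx_sum_cong) (simp add: P)
  also have "\<dots> = (\<Sum>c'=1..l. if c' = c then (\<Sum>s=1..q c'. f (pos q c' s)) else 0)"
    by (rule sum.cong[OF refl]) simp
  also have "\<dots> = (\<Sum>s=1..q c. f (pos q c s))" using c by (subst sum.delta) auto
  finally show ?thesis .
qed

lemma double_idx_step:
  assumes p1: "1 \<le> p" and r1: "1 \<le> r" and pq: "\<And>c. 1 \<le> c \<Longrightarrow> c \<le> l \<Longrightarrow> p \<le> q c" and rq: "\<And>c. 1 \<le> c \<Longrightarrow> c \<le> l \<Longrightarrow> r \<le> q c"
  shows "sum_list (map (\<lambda>i. sum_list (map (\<lambda>j. if colq q i = colq q j + 1 \<and> rowq q i = p \<and> rowq q j = r then V i j else 0) (idx q l))) (idx q l))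
    = (\<Sum>c\<in>{1..<l}. V (pos q (c+1) p) (pos q c r) :: complex)"
proof -
  have "sum_list (map (\<lambda>i. sum_list (map (\<lambda>j. if colq q i = colq q j + 1 \<and> rowq q i = p \<and> rowq q j = r then V i j else 0) (idx q l))) (idx q l))
     = (\<Sum>c=1..l. \<Sum>s=1..q c. if s = p \<and> 1 < c then V (pos q c s) (pos q (c-1) r) else 0)"
  proof (rule idx_sum_cong)
    fix c s assume cs: "1 \<le> c" "c \<le> l" "1 \<le> s" "s \<le> q c"
    have "sum_list (map (\<lambda>j. if colq q (pos q c s) = colq q j + 1 \<and> rowq q (pos q c s) = p \<and> rowq q j = r then V (pos q c s) j else 0) (idx q l))
      = (\<Sum>c'=1..l. \<Sum>s'=1..q c'. if s' = r \<and> (c' + 1 = c \<and> s = p) then V (pos q c s) (pos q c' s') else 0)"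
      by (rule idx_sum_cong) (use cs in auto)
    also have "\<dots> = (\<Sum>c'=1..l. if c' = c - 1 \<and> (1 < c \<and> s = p) then V (pos q c s) (pos q c' r) else 0)"
    proof (rule sum.cong[OF refl])
      fix c' assume c': "c' \<in> {1..l}"
      show "(\<Sum>s'=1..q c'. if s' = r \<and> (c' + 1 = c \<and> s = p) then V (pos q c s) (pos q c' s') else 0)
          = (if c' = c - 1 \<and> (1 < c \<and> s = p) then V (pos q c s) (pos q c' r) else 0)"
        using c' rq[of c'] r1 by (subst sum_delta_conj) auto
    qed
    also have "\<dots> = (if s = p \<and> 1 < c then V (pos q c s) (pos q (c-1) r) else 0)"
      using cs by (subst sum_delta_conj) auto
    finally show "sum_list (map (\<lambda>j. if colq q (pos q c s) = colq q j + 1 \<and> rowq q (pos q c s) = p \<and> rowq q j = r then V (pos q c s) j else 0) (idx q l))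
      = (if s = p \<and> 1 < c then V (pos q c s) (pos q (c-1) r) else 0)" .
  qed
  also have "\<dots> = (\<Sum>c=1..l. if 1 < c then V (pos q (c - 1 + 1) p) (pos q (c-1) r) else 0)"
  proof (rule sum.cong[OF refl])
    fix c assume c: "c \<in> {1..l}"
    show "(\<Sum>s=1..q c. if s = p \<and> 1 < c then V (pos q c s) (pos q (c-1) r) else 0) = (if 1 < c then V (pos q (c - 1 + 1) p) (pos q (c-1) r) else 0)"
      using c pq[of c] p1 by (subst sum_delta_conj) auto
  qed
  also have "\<dots> = (\<Sum>c\<in>{1..<l}. V (pos q (c+1) p) (pos q c r))"
    by (rule tele_shift)
  finally show ?thesis .
qed


definition CfX :: "(nat \<Rightarrow> nat) \<Rightarrow> nat \<Rightarrow> nat \<Rightarrow> word \<Rightarrow> nat \<Rightarrow> nat \<Rightarrow> nat \<Rightarrow> complex" where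
  "CfX q p r x c s c' = dl [(E (pos q c s) (pos q c r), -1), (Psi (pos q c' p) (pos q (c'-1) s), -1)] x"
definition BfX :: "(nat \<Rightarrow> nat) \<Rightarrow> nat \<Rightarrow> nat \<Rightarrow> word \<Rightarrow> nat \<Rightarrow> nat \<Rightarrow> nat \<Rightarrow> complex" where
  "BfX q p r x c' c s = dl [(Psi (pos q c s) (pos q (c-1) r), -1), (E (pos q c' p) (pos q c' s), -1)] x"
definition HX :: "(nat \<Rightarrow> nat) \<Rightarrow> nat \<Rightarrow> nat \<Rightarrow> word \<Rightarrow> nat \<Rightarrow> complex" where
  "HX q p r x c = dl [(Psi (pos q (c+2) p) (pos q c r), -1)] x"
definition DX :: "(nat \<Rightarrow> nat) \<Rightarrow> nat \<Rightarrow> nat \<Rightarrow> word \<Rightarrow> nat \<Rightarrow> complex" where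
  "DX q p r x c = dl [(Psi (pos q (c+1) p) (pos q c r), -2)] x"

lemma d0_gen_coord:
  assumes c: "1 \<le> c" "c < l" and p: "1 \<le> p" "p \<le> q (c+1)" and r: "1 \<le> r" "r \<le> q c"
    and p2: "c + 1 < l \<Longrightarrow> p \<le> q (c+2)"
  shows "vec_of (d0_gen q l k (pos q (c+1) p) (pos q c r)) x =
     (\<Sum>s=1..q c. CfX q p r x c s (c+1)) - (\<Sum>s=1..q (c+1). BfX q p r x (c+1) (c+1) s)
     + alpha q l k (c+1) * DX q p r x c + (if c+1 < l then HX q p r x c else 0) - (if 1 < c then HX q p r x (c-1) else 0)"
proof -
  let ?i = "pos q (c+1) p" and ?j = "pos q c r"
  have ci: "colq q ?i = c + 1" using c p by simp
  have cj: "colq q ?j = c" using c r by simp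
  have e1: "vec_of [(1, [(E r' ?j, -1), (Psi ?i r', -1)]). r' \<leftarrow> idx q l, colq q r' < colq q ?i \<and> colq q ?j \<le> colq q r'] x
      = (\<Sum>s=1..q c. CfX q p r x c s (c+1))"
    unfolding vec_of_comp1 ci cj
    by (subst idx_col_sum[where c = c]) (use c in \<open>auto simp: CfX_def\<close>)
  have e2: "vec_of [(-1, [(Psi r' ?j, -1), (E ?i r', -1)]). r' \<leftarrow> idx q l, colq q ?j < colq q r' \<and> colq q r' \<le> colq q ?i] x
      = - (\<Sum>s=1..q (c+1). BfX q p r x (c+1) (c+1) s)"
    unfolding vec_of_comp1 ci cj
    by (subst idx_col_sum[where c = "c+1"]) (use c in \<open>auto simp: BfX_def sum_negf\<close>)
  have e3: "vec_of (if colq q ?j < colq q ?i then [(alpha q l k (colq q ?i), [(Psi ?i ?j, -2)])] else []) x = alpha q l k (c+1) * DX q p r x c"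
    unfolding ci cj by (simp add: DX_def dl_def)
  have e4: "vec_of (if has_hat q l ?i then [(1, [(Psi (hat q ?i) ?j, -1)])] else []) x = (if c+1 < l then HX q p r x c else 0)"
    using c p p2 by (simp add: HX_def dl_def numeral_2_eq_2)
  have e5: "vec_of (if has_tilde q ?j then [(-1, [(Psi ?i (tilde q ?j), -1)])] else []) x = - (if 1 < c then HX q p r x (c-1) else 0)"
    using c r by (auto simp: HX_def dl_def numeral_2_eq_2)
  show ?thesis
    by (simp only: d0_gen_def vec_of_append e1 e2 e3 e4 e5) (simp add: algebra_simps)
qed


lemma d0w_pair_coord:
  assumes c: "1 \<le> c" "c \<le> l" and ca: "1 \<le> ca" "ca \<le> l" and s: "1 \<le> s" "s \<le> q c" "s \<le> q ca"
    and r: "1 \<le> r" "r \<le> q c" and p: "1 \<le> p" "p \<le> q ca"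
  shows "vec_of (d0w q l k [(E (pos q c s) (pos q c r), -1), (E (pos q ca p) (pos q ca s), -1)]) x =
     (if c < l \<and> s \<le> q (c+1) then BfX q p r x ca (c+1) s else 0) - (if 1 < c then BfX q p r x ca c s else 0)
     + (if ca < l \<and> p \<le> q (ca+1) then CfX q p r x c s (ca+1) else 0) - (if 1 < ca then CfX q p r x c s ca else 0)"
proof -
  have h1: "colq q (pos q c s) = colq q (pos q c r)" using c s r by simp
  have h2: "colq q (pos q ca p) = colq q (pos q ca s)" using ca s p by simp
  show ?thesis
    unfolding d0w_pair[OF h1 h2] using c ca s r p
    by (simp add: BfX_def CfX_def)
qed

lemma BLK0:
  assumes p1: "1 \<le> p" and r1: "1 \<le> r" and pq: "\<And>c. 1 \<le> c \<Longrightarrow> c \<le> l \<Longrightarrow> p \<le> q c" and rq: "\<And>c. 1 \<le> c \<Longrightarrow> c \<le> l \<Longrightarrow> r \<le> q c"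
  shows "sum_list (map (\<lambda>i. sum_list (map (\<lambda>j. if colq q i = colq q j + 1 \<and> rowq q i = p \<and> rowq q j = r then 1 * vec_of (d0_gen q l k i j) x else 0) (idx q l))) (idx q l))
    = (\<Sum>c\<in>{1..<l}. (\<Sum>s=1..q c. CfX q p r x c s (c+1)) - (\<Sum>s=1..q (c+1). BfX q p r x (c+1) (c+1) s)
     + alpha q l k (c+1) * DX q p r x c + (if c+1 < l then HX q p r x c else 0) - (if 1 < c then HX q p r x (c-1) else 0))"
proof -
  have st: "sum_list (map (\<lambda>i. sum_list (map (\<lambda>j. if colq q i = colq q j + 1 \<and> rowq q i = p \<and> rowq q j = r then 1 * vec_of (d0_gen q l k i j) x else 0) (idx q l))) (idx q l))
    = (\<Sum>c\<in>{1..<l}. 1 * vec_of (d0_gen q l k (pos q (c+1) p) (pos q c r)) x)"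
    by (rule double_idx_step[OF p1 r1 pq rq])
  show ?thesis unfolding st
  proof (rule sum.cong[OF refl])
    fix c assume c: "c \<in> {1..<l}"
    show "1 * vec_of (d0_gen q l k (pos q (c+1) p) (pos q c r)) x = (\<Sum>s=1..q c. CfX q p r x c s (c+1)) - (\<Sum>s=1..q (c+1). BfX q p r x (c+1) (c+1) s)
       + alpha q l k (c+1) * DX q p r x c + (if c+1 < l then HX q p r x c else 0) - (if 1 < c then HX q p r x (c-1) else 0)"
      using c p1 r1 pq[of "c+1"] rq[of c] pq[of "c+2"] by (subst d0_gen_coord) auto
  qed
qed

lemma BLK1:
  assumes p1: "1 \<le> p" and r1: "1 \<le> r" and pq: "\<And>c. 1 \<le> c \<Longrightarrow> c \<le> l \<Longrightarrow> p \<le> q c" and rq: "\<And>c. 1 \<le> c \<Longrightarrow> c \<le> l \<Longrightarrow> r \<le> q c"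
  shows "sum_list (map (\<lambda>i. sum_list (map (\<lambda>j. if colq q i = colq q j \<and> rowq q i = p \<and> rowq q j = r then - gamma q l k (colq q i) * vec_of (d0w q l k [(E i j, -2)]) x else 0) (idx q l))) (idx q l))
    = (\<Sum>c=1..l. - gamma q l k c * ((if c < l then DX q p r x c else 0) - (if 1 < c then DX q p r x (c-1) else 0)))"
proof -
  have cc: "\<And>i j. (colq q i = colq q j \<and> rowq q i = p \<and> rowq q j = r) = (rowq q i = p \<and> rowq q j = r \<and> colq q i = colq q j)" by blast
  show ?thesis
    unfolding cc double_idx_diag[OF p1 r1]
  proof (rule sum.cong[OF refl])
    fix c assume c: "c \<in> {1..l}"
    have pc: "p \<le> q c" and rc: "r \<le> q c" using pq[of c] rq[of c] c by auto
    have h: "colq q (pos q c p) = colq q (pos q c r)" using c pc rc p1 r1 by simp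
    show "(if p \<le> q c \<and> r \<le> q c then - gamma q l k (colq q (pos q c p)) * vec_of (d0w q l k [(E (pos q c p) (pos q c r), -2)]) x else 0)
      = - gamma q l k c * ((if c < l then DX q p r x c else 0) - (if 1 < c then DX q p r x (c-1) else 0))"
      unfolding d0w_diag2[OF h] using c pc rc p1 r1 pq[of "c+1"] by (auto simp: DX_def)
  qed
qed


lemma BLK2:
  assumes l1: "1 \<le> l" and p1: "1 \<le> p" and r1: "1 \<le> r" and pl: "p \<le> q l" and rl: "r \<le> q l"
    and qm: "\<And>a b. 1 \<le> a \<Longrightarrow> a \<le> b \<Longrightarrow> b \<le> l \<Longrightarrow> q b \<le> q a"
  shows "sum_list (map (\<lambda>u. sum_list (map (\<lambda>j. sum_list (map (\<lambda>i. sum_list (map (\<lambda>v.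
     if colq q u = colq q j \<and> colq q j < colq q i \<and> colq q i = colq q v \<and> rowq q u = rowq q v \<and> rowq q v \<le> q l
        \<and> rowq q i = p \<and> rowq q j = r then 1 * vec_of (d0w q l k [(E u j, -1), (E i v, -1)]) x else 0)
     (idx q l))) (idx q l))) (idx q l))) (idx q l))
   = (\<Sum>c=1..l. \<Sum>s=1..q c. \<Sum>ca=1..l. if c < ca \<and> s \<le> q l then
        (BfX q p r x ca (c+1) s - (if 1 < c then BfX q p r x ca c s else 0)) + ((if ca < l then CfX q p r x c s (ca+1) else 0) - CfX q p r x c s ca) else 0)"
proof -
  have pq: "\<And>c. 0 < c \<Longrightarrow> c \<le> l \<Longrightarrow> p \<le> q c"
  proof -
    fix c :: nat assume "0 < c" "c \<le> l"
    then have "q l \<le> q c" using qm[of c l] by simp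
    then show "p \<le> q c" using pl by simp
  qed
  have rq: "\<And>c. 0 < c \<Longrightarrow> c \<le> l \<Longrightarrow> r \<le> q c"
  proof -
    fix c :: nat assume "0 < c" "c \<le> l"
    then have "q l \<le> q c" using qm[of c l] by simp
    then show "r \<le> q c" using rl by simp
  qed
  have cc: "\<And>u j i v. (colq q u = colq q j \<and> colq q j < colq q i \<and> colq q i = colq q v \<and> rowq q u = rowq q v \<and> rowq q v \<le> q l
        \<and> rowq q i = p \<and> rowq q j = r) = (colq q u = colq q j \<and> rowq q j = r \<and> rowq q u \<le> q l \<and> colq q j < colq q i \<and> rowq q i = p \<and> colq q i = colq q v
        \<and> rowq q u = rowq q v)" by auto
  have st: "sum_list (map (\<lambda>u. sum_list (map (\<lambda>j. sum_list (map (\<lambda>i. sum_list (map (\<lambda>v.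
     if colq q u = colq q j \<and> rowq q j = r \<and> rowq q u \<le> q l \<and> colq q j < colq q i \<and> rowq q i = p \<and> colq q i = colq q v
        \<and> rowq q u = rowq q v then 1 * vec_of (d0w q l k [(E u j, -1), (E i v, -1)]) x else 0)
     (idx q l))) (idx q l))) (idx q l))) (idx q l))
    = (\<Sum>c=1..l. \<Sum>s=1..q c. if s \<le> q l then (\<Sum>ca=1..l. if c < ca then (if s \<le> q ca then
        1 * vec_of (d0w q l k [(E (pos q c s) (pos q c r), -1), (E (pos q ca p) (pos q ca s), -1)]) x else 0) else 0) else 0)"
    by (rule quad_idx[where S = "\<lambda>s. s \<le> q l" and R = "(<)", OF p1 r1 pq rq])
  show ?thesis unfolding cc st
  proof (rule sum.cong[OF refl], rule sum.cong[OF refl])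
    fix c s assume c: "c \<in> {1..l}" and s: "s \<in> {1..q c}"
    show "(if s \<le> q l then (\<Sum>ca=1..l. if c < ca then (if s \<le> q ca then
        1 * vec_of (d0w q l k [(E (pos q c s) (pos q c r), -1), (E (pos q ca p) (pos q ca s), -1)]) x else 0) else 0) else 0)
      = (\<Sum>ca=1..l. if c < ca \<and> s \<le> q l then
        (BfX q p r x ca (c+1) s - (if 1 < c then BfX q p r x ca c s else 0)) + ((if ca < l then CfX q p r x c s (ca+1) else 0) - CfX q p r x c s ca) else 0)"
    proof (cases "s \<le> q l")
      case False then show ?thesis by simp
    next
      case True
      show ?thesis
      proof -
        have "(\<Sum>ca=1..l. if c < ca then (if s \<le> q ca then
            1 * vec_of (d0w q l k [(E (pos q c s) (pos q c r), -1), (E (pos q ca p) (pos q ca s), -1)]) x else 0) else 0)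
          = (\<Sum>ca=1..l. if c < ca \<and> s \<le> q l then
            (BfX q p r x ca (c+1) s - (if 1 < c then BfX q p r x ca c s else 0)) + ((if ca < l then CfX q p r x c s (ca+1) else 0) - CfX q p r x c s ca) else 0)"
        proof (rule sum.cong[OF refl])
          fix ca assume ca: "ca \<in> {1..l}"
          show "(if c < ca then (if s \<le> q ca then
              1 * vec_of (d0w q l k [(E (pos q c s) (pos q c r), -1), (E (pos q ca p) (pos q ca s), -1)]) x else 0) else 0)
            = (if c < ca \<and> s \<le> q l then
              (BfX q p r x ca (c+1) s - (if 1 < c then BfX q p r x ca c s else 0)) + ((if ca < l then CfX q p r x c s (ca+1) else 0) - CfX q p r x c s ca) else 0)"
          proof (cases "c < ca")
            case False then show ?thesis by simp
          next
            case cca: True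
            have sca: "s \<le> q ca" using True qm[of ca l] ca by auto
            have sc1: "s \<le> q (c+1)" using True qm[of "c+1" l] cca ca by auto
            have pca1: "ca < l \<Longrightarrow> p \<le> q (ca+1)" using pq[of "ca+1"] by simp
            show ?thesis
              using c ca s sca sc1 cca True p1 r1 pq[of ca] rq[of c] pca1
              by (subst d0w_pair_coord) auto
          qed
        qed
        then show ?thesis using True by simp
      qed
    qed
  qed
qed

lemma BLK3:
  assumes l1: "1 \<le> l" and p1: "1 \<le> p" and r1: "1 \<le> r" and pl: "p \<le> q l" and rl: "r \<le> q l"
    and qm: "\<And>a b. 1 \<le> a \<Longrightarrow> a \<le> b \<Longrightarrow> b \<le> l \<Longrightarrow> q b \<le> q a"
  shows "sum_list (map (\<lambda>u. sum_list (map (\<lambda>j. sum_list (map (\<lambda>i. sum_list (map (\<lambda>v.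
     if colq q u = colq q j \<and> colq q i \<le> colq q j \<and> colq q i = colq q v \<and> q l < rowq q v \<and> rowq q u = rowq q v
        \<and> rowq q i = p \<and> rowq q j = r then -1 * vec_of (d0w q l k [(E u j, -1), (E i v, -1)]) x else 0)
     (idx q l))) (idx q l))) (idx q l))) (idx q l))
   = (\<Sum>c=1..l. \<Sum>s=1..q c. \<Sum>ca=1..l. if ca \<le> c \<and> q l < s then
        - (((if c < l \<and> s \<le> q (c+1) then BfX q p r x ca (c+1) s else 0) - (if 1 < c then BfX q p r x ca c s else 0))
          + ((if ca < l then CfX q p r x c s (ca+1) else 0) - (if 1 < ca then CfX q p r x c s ca else 0))) else 0)"
proof -
  have pq: "\<And>c. 0 < c \<Longrightarrow> c \<le> l \<Longrightarrow> p \<le> q c"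
  proof -
    fix c :: nat assume "0 < c" "c \<le> l"
    then have "q l \<le> q c" using qm[of c l] by simp
    then show "p \<le> q c" using pl by simp
  qed
  have rq: "\<And>c. 0 < c \<Longrightarrow> c \<le> l \<Longrightarrow> r \<le> q c"
  proof -
    fix c :: nat assume "0 < c" "c \<le> l"
    then have "q l \<le> q c" using qm[of c l] by simp
    then show "r \<le> q c" using rl by simp
  qed
  have cc: "\<And>u j i v. (colq q u = colq q j \<and> colq q i \<le> colq q j \<and> colq q i = colq q v \<and> q l < rowq q v \<and> rowq q u = rowq q v
        \<and> rowq q i = p \<and> rowq q j = r) = (colq q u = colq q j \<and> rowq q j = r \<and> q l < rowq q u \<and> colq q i \<le> colq q j \<and> rowq q i = p \<and> colq q i = colq q v
        \<and> rowq q u = rowq q v)" by auto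
  have st: "sum_list (map (\<lambda>u. sum_list (map (\<lambda>j. sum_list (map (\<lambda>i. sum_list (map (\<lambda>v.
     if colq q u = colq q j \<and> rowq q j = r \<and> q l < rowq q u \<and> colq q i \<le> colq q j \<and> rowq q i = p \<and> colq q i = colq q v
        \<and> rowq q u = rowq q v then -1 * vec_of (d0w q l k [(E u j, -1), (E i v, -1)]) x else 0)
     (idx q l))) (idx q l))) (idx q l))) (idx q l))
    = (\<Sum>c=1..l. \<Sum>s=1..q c. if q l < s then (\<Sum>ca=1..l. if ca \<le> c then (if s \<le> q ca then
        -1 * vec_of (d0w q l k [(E (pos q c s) (pos q c r), -1), (E (pos q ca p) (pos q ca s), -1)]) x else 0) else 0) else 0)"
    by (rule quad_idx[where S = "\<lambda>s. q l < s" and R = "\<lambda>a b. b \<le> a", OF p1 r1 pq rq])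
  show ?thesis unfolding cc st
  proof (rule sum.cong[OF refl], rule sum.cong[OF refl])
    fix c s assume c: "c \<in> {1..l}" and s: "s \<in> {1..q c}"
    show "(if q l < s then (\<Sum>ca=1..l. if ca \<le> c then (if s \<le> q ca then
        -1 * vec_of (d0w q l k [(E (pos q c s) (pos q c r), -1), (E (pos q ca p) (pos q ca s), -1)]) x else 0) else 0) else 0)
      = (\<Sum>ca=1..l. if ca \<le> c \<and> q l < s then
        - (((if c < l \<and> s \<le> q (c+1) then BfX q p r x ca (c+1) s else 0) - (if 1 < c then BfX q p r x ca c s else 0))
          + ((if ca < l then CfX q p r x c s (ca+1) else 0) - (if 1 < ca then CfX q p r x c s ca else 0))) else 0)"
    proof (cases "q l < s")
      case False then show ?thesis by simp
    next
      case True
      have "(\<Sum>ca=1..l. if ca \<le> c then (if s \<le> q ca then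
            -1 * vec_of (d0w q l k [(E (pos q c s) (pos q c r), -1), (E (pos q ca p) (pos q ca s), -1)]) x else 0) else 0)
          = (\<Sum>ca=1..l. if ca \<le> c \<and> q l < s then
            - (((if c < l \<and> s \<le> q (c+1) then BfX q p r x ca (c+1) s else 0) - (if 1 < c then BfX q p r x ca c s else 0))
              + ((if ca < l then CfX q p r x c s (ca+1) else 0) - (if 1 < ca then CfX q p r x c s ca else 0))) else 0)"
      proof (rule sum.cong[OF refl])
        fix ca assume ca: "ca \<in> {1..l}"
        show "(if ca \<le> c then (if s \<le> q ca then
              -1 * vec_of (d0w q l k [(E (pos q c s) (pos q c r), -1), (E (pos q ca p) (pos q ca s), -1)]) x else 0) else 0)
            = (if ca \<le> c \<and> q l < s then
              - (((if c < l \<and> s \<le> q (c+1) then BfX q p r x ca (c+1) s else 0) - (if 1 < c then BfX q p r x ca c s else 0))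
                + ((if ca < l then CfX q p r x c s (ca+1) else 0) - (if 1 < ca then CfX q p r x c s ca else 0))) else 0)"
        proof (cases "ca \<le> c")
          case False then show ?thesis by simp
        next
          case cca: True
          have sca: "s \<le> q ca" using s qm[of ca c] ca c cca by auto
          have pca1: "ca < l \<Longrightarrow> p \<le> q (ca+1)" using pq[of "ca+1"] by simp
          show ?thesis
            using c ca s sca cca True p1 r1 pq[of ca] rq[of c] pca1
            by (subst d0w_pair_coord) auto
        qed
      qed
      then show ?thesis using True by simp
    qed
  qed
qed


lemma sum_lt_restrict: "(\<Sum>c=1..(l::nat). if c < b then F c else 0) = (\<Sum>c\<in>{1..<min b (l+1)}. F c :: complex)"
proof -
  have "(\<Sum>c=1..l. if c < b then F c else 0) = (\<Sum>c\<in>{1..l} \<inter> {c. c < b}. F c)"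
    by (simp add: sum.inter_restrict)
  also have "{1..l} \<inter> {c. c < b} = {1..<min b (l+1)}" by auto
  finally show ?thesis .
qed

lemma tele_up: "(\<Sum>c\<in>{1..<n::nat}. g (c+1) - (if 1 < c then g c else 0)) = (if 1 < n then g n else (0::complex))"
proof (induction n)
  case 0 then show ?case by simp
next
  case (Suc n)
  show ?case
  proof (cases "n = 0")
    case True then show ?thesis by simp
  next
    case False
    then have "(\<Sum>c\<in>{1..<Suc n}. g (c+1) - (if 1 < c then g c else 0)) =
       (\<Sum>c\<in>{1..<n}. g (c+1) - (if 1 < c then g c else 0)) + (g (n+1) - (if 1 < n then g n else 0))"
      by (simp add: sum.op_ivl_Suc)
    also have "\<dots> = g (Suc n)" using Suc by simp
    finally show ?thesis using False by simp
  qed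
qed

lemma TA: assumes "1 \<le> c'" "c' \<le> l"
  shows "(\<Sum>c=1..(l::nat). if c < c' then g (c+1) - (if 1 < c then g c else 0) else 0) = (if 1 < c' then g c' else (0::complex))"
proof -
  have "min c' (l+1) = c'" using assms by simp
  then show ?thesis by (simp only: sum_lt_restrict tele_up)
qed

lemma TB_aux:
  assumes dc: "\<And>c. 1 \<le> c \<Longrightarrow> c < l \<Longrightarrow> P (c+1) \<Longrightarrow> P c"
  shows "1 \<le> a \<Longrightarrow> a \<le> l \<Longrightarrow> (\<Sum>c=a..(l::nat). if P c then ((if c < l \<and> P (c+1) then g (c+1) else 0) - (if 1 < c then g c else 0)) else 0)
     = - (if P a \<and> 1 < a then g a else (0::complex))"
proof (induction "l - a" arbitrary: a)
  case 0
  then have "a = l" by simp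
  then show ?case by (simp only: atLeastAtMost_singleton) simp
next
  case (Suc d)
  then have al: "a < l" by simp
  have ih: "(\<Sum>c=a+1..l. if P c then ((if c < l \<and> P (c+1) then g (c+1) else 0) - (if 1 < c then g c else 0)) else 0)
     = - (if P (a+1) \<and> 1 < a+1 then g (a+1) else 0)"
    using Suc al by (intro Suc.hyps) auto
  have "(\<Sum>c=a..l. if P c then ((if c < l \<and> P (c+1) then g (c+1) else 0) - (if 1 < c then g c else 0)) else 0)
     = (if P a then ((if a < l \<and> P (a+1) then g (a+1) else 0) - (if 1 < a then g a else 0)) else 0)
       + (\<Sum>c=a+1..l. if P c then ((if c < l \<and> P (c+1) then g (c+1) else 0) - (if 1 < c then g c else 0)) else 0)"
    using al by (simp add: sum.atLeast_Suc_atMost)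
  also have "\<dots> = - (if P a \<and> 1 < a then g a else 0)"
    unfolding ih using dc[of a] Suc.prems al by auto
  finally show ?case .
qed

lemma TB:
  assumes dc: "\<And>c. 1 \<le> c \<Longrightarrow> c < l \<Longrightarrow> P (c+1) \<Longrightarrow> P c" and a: "1 \<le> a" "a \<le> l"
  shows "(\<Sum>c=1..(l::nat). if P c \<and> a \<le> c then ((if c < l \<and> P (c+1) then g (c+1) else 0) - (if 1 < c then g c else 0)) else 0)
     = - (if P a \<and> 1 < a then g a else (0::complex))"
proof -
  have "(\<Sum>c=1..(l::nat). if P c \<and> a \<le> c then ((if c < l \<and> P (c+1) then g (c+1) else 0) - (if 1 < c then g c else 0)) else 0)
    = (\<Sum>c\<in>{1..l} \<inter> {c. a \<le> c}. if P c then ((if c < l \<and> P (c+1) then g (c+1) else 0) - (if 1 < c then g c else 0)) else 0)"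
    by (simp add: sum.inter_restrict) (intro sum.cong; auto)
  also have "{1..l} \<inter> {c. a \<le> c} = {a..l}" using a by auto
  also have "(\<Sum>c\<in>{a..l}. if P c then ((if c < l \<and> P (c+1) then g (c+1) else 0) - (if 1 < c then g c else 0)) else 0)
     = - (if P a \<and> 1 < a then g a else (0::complex))"
    by (rule TB_aux[OF dc a])
  finally show ?thesis .
qed

lemma TC_aux: "1 \<le> a \<Longrightarrow> a \<le> l \<Longrightarrow> (\<Sum>c'=a..(l::nat). (if c' < l then h (c'+1) else 0) - h c') = - (h a :: complex)"
proof (induction "l - a" arbitrary: a)
  case 0
  then have "a = l" by simp
  then show ?case by (simp only: atLeastAtMost_singleton) simp
next
  case (Suc d)
  then have al: "a < l" by simp
  have ih: "(\<Sum>c'=a+1..l. (if c' < l then h (c'+1) else 0) - h c') = - h (a+1)"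
    using Suc al by (intro Suc.hyps) auto
  have "(\<Sum>c'=a..l. (if c' < l then h (c'+1) else 0) - h c') = ((if a < l then h (a+1) else 0) - h a) + (\<Sum>c'=a+1..l. (if c' < l then h (c'+1) else 0) - h c')"
    using al by (simp add: sum.atLeast_Suc_atMost)
  then show ?case unfolding ih using al by simp
qed

lemma TC: assumes "c \<le> l"
  shows "(\<Sum>c'=1..(l::nat). if c < c' then (if c' < l then h (c'+1) else 0) - h c' else 0) = - (if c < l then h (c+1) else (0::complex))"
proof -
  have "(\<Sum>c'=1..(l::nat). if c < c' then (if c' < l then h (c'+1) else 0) - h c' else 0)
     = (\<Sum>c'\<in>{1..l} \<inter> {c'. c < c'}. (if c' < l then h (c'+1) else 0) - h c')"
    by (simp add: sum.inter_restrict)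
  also have "{1..l} \<inter> {c'. c < c'} = {c+1..l}" by auto
  finally show ?thesis using TC_aux[of "c+1" l h] assms by (cases "c < l") auto
qed

lemma TD: "c \<le> l \<Longrightarrow> (\<Sum>c'=1..(l::nat). if c' \<le> c then (if c' < l then h (c'+1) else 0) - (if 1 < c' then h c' else 0) else 0)
    = (if 1 \<le> c \<and> c < l then h (c+1) else (0::complex))"
proof (induction c)
  case 0 then show ?case by simp
next
  case (Suc c)
  have "(\<Sum>c'=1..l. if c' \<le> Suc c then (if c' < l then h (c'+1) else 0) - (if 1 < c' then h c' else 0) else 0)
    = (\<Sum>c'=1..l. (if c' \<le> c then (if c' < l then h (c'+1) else 0) - (if 1 < c' then h c' else 0) else 0)
        + (if c' = Suc c then (if c' < l then h (c'+1) else 0) - (if 1 < c' then h c' else 0) else 0))"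
    by (intro sum.cong) auto
  also have "\<dots> = (if 1 \<le> c \<and> c < l then h (c+1) else 0) + ((if Suc c < l then h (Suc c+1) else 0) - (if 1 < Suc c then h (Suc c) else 0))"
    using Suc by (simp add: sum.distrib)
  also have "\<dots> = (if 1 \<le> Suc c \<and> Suc c < l then h (Suc c+1) else 0)"
    using Suc.prems by auto
  finally show ?case .
qed


lemma tele_shift2: "(\<Sum>c=1..(l::nat). if 1 < c then g (c - 1) else 0) = (\<Sum>c\<in>{1..<l}. g c :: complex)"
proof (induction l)
  case 0 then show ?case by simp
next
  case (Suc l)
  show ?case
  proof (cases "l = 0")
    case True then show ?thesis by simp
  next
    case False
    have "(\<Sum>c=1..Suc l. if 1 < c then g (c - 1) else 0) = (\<Sum>c=1..l. if 1 < c then g (c - 1) else 0) + g l"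
      using False by (simp add: sum.cl_ivl_Suc)
    also have "\<dots> = (\<Sum>c\<in>{1..<l}. g c) + g l" using Suc by simp
    also have "\<dots> = (\<Sum>c\<in>{1..<Suc l}. g c)" using False by (simp add: sum.op_ivl_Suc)
    finally show ?thesis .
  qed
qed

lemma lt_restrict2: "(\<Sum>c=1..(l::nat). if c < l then h c else 0) = (\<Sum>c\<in>{1..<l}. h c :: complex)"
proof -
  have "(\<Sum>c=1..l. if c < l then h c else 0) = (\<Sum>c\<in>{1..l} \<inter> {c. c < l}. h c)"
    by (simp add: sum.inter_restrict)
  also have "{1..l} \<inter> {c. c < l} = {1..<l}" by auto
  finally show ?thesis .
qed

lemma partH: "(\<Sum>c\<in>{1..<(l::nat)}. (if c+1 < l then H c else 0) - (if 1 < c then H (c-1) else 0)) = (0::complex)"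
proof -
  have a: "(\<Sum>c\<in>{1..<l}. (if c+1 < l then H c else 0)) = (\<Sum>c=1..(l-1). if c < l - 1 then H c else 0)"
  proof (cases l)
    case 0 then show ?thesis by simp
  next
    case (Suc n)
    then have "{1..<l} = {1..l-1}" by auto
    then show ?thesis by (intro sum.cong) auto
  qed
  have b: "(\<Sum>c\<in>{1..<l}. (if 1 < c then H (c-1) else 0)) = (\<Sum>c=1..(l-1). if 1 < c then H (c-1) else 0)"
  proof (cases l)
    case 0 then show ?thesis by simp
  next
    case (Suc n)
    then have "{1..<l} = {1..l-1}" by auto
    then show ?thesis by simp
  qed
  show ?thesis
    by (simp only: sum_subtractf a b lt_restrict2 tele_shift2) simp
qed

lemma partD:
  assumes gam: "\<And>c. gam c = (\<Sum>u\<in>{c+1..l}. alp u)"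
  shows "(\<Sum>c\<in>{1..<(l::nat)}. alp (c+1) * D c)
    + (\<Sum>c=1..l. - gam c * ((if c < l then D c else 0) - (if 1 < c then D (c-1) else 0))) = (0::complex)"
proof -
  have "(\<Sum>c=1..l. - gam c * ((if c < l then D c else 0) - (if 1 < c then D (c-1) else 0)))
     = (\<Sum>c=1..l. if 1 < c then gam (c - 1 + 1) * D (c-1) else 0) - (\<Sum>c=1..l. if c < l then gam c * D c else 0)"
    by (simp add: sum_subtractf[symmetric] algebra_simps) (intro sum.cong; auto)
  also have "\<dots> = (\<Sum>c\<in>{1..<l}. gam (c+1) * D c) - (\<Sum>c\<in>{1..<l}. gam c * D c)"
    by (simp only: tele_shift2[where g = "\<lambda>c. gam (c+1) * D c"] lt_restrict2)
  finally have e: "(\<Sum>c=1..l. - gam c * ((if c < l then D c else 0) - (if 1 < c then D (c-1) else 0)))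
     = (\<Sum>c\<in>{1..<l}. gam (c+1) * D c) - (\<Sum>c\<in>{1..<l}. gam c * D c)" .
  have g: "\<And>c. c \<in> {1..<l} \<Longrightarrow> gam c = alp (c+1) + gam (c+1)"
  proof -
    fix c assume c: "c \<in> {1..<l}"
    have "gam c = (\<Sum>u\<in>{c+1..l}. alp u)" by (rule gam)
    also have "\<dots> = alp (c+1) + (\<Sum>u\<in>{Suc (c+1)..l}. alp u)" using c by (subst sum.atLeast_Suc_atMost) auto
    also have "\<dots> = alp (c+1) + gam (c+1)" by (simp add: gam)
    finally show "gam c = alp (c+1) + gam (c+1)" .
  qed
  have "(\<Sum>c\<in>{1..<l}. alp (c+1) * D c) + ((\<Sum>c\<in>{1..<l}. gam (c+1) * D c) - (\<Sum>c\<in>{1..<l}. gam c * D c))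
     = (\<Sum>c\<in>{1..<l}. (alp (c+1) + gam (c+1) - gam c) * D c)"
    by (simp add: sum.distrib sum_subtractf algebra_simps)
  also have "\<dots> = 0" by (intro sum.neutral) (simp add: g)
  finally show ?thesis unfolding e .
qed


lemma partC:
  fixes q :: "nat \<Rightarrow> nat" and m :: nat
  assumes mq: "\<And>c. 1 \<le> c \<Longrightarrow> c \<le> l \<Longrightarrow> m \<le> q c"
  shows "(\<Sum>c\<in>{1..<(l::nat)}. \<Sum>s=1..q c. Cf c s (c+1))
    + (\<Sum>c=1..l. \<Sum>s=1..q c. \<Sum>c'=1..l. if c < c' \<and> s \<le> m then (if c' < l then Cf c s (c'+1) else 0) - Cf c s c' else 0)
    - (\<Sum>c=1..l. \<Sum>s=1..q c. \<Sum>c'=1..l. if c' \<le> c \<and> m < s then (if c' < l then Cf c s (c'+1) else 0) - (if 1 < c' then Cf c s c' else 0) else 0)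
    = (0::complex)"
proof -
  have e1: "(\<Sum>c\<in>{1..<(l::nat)}. \<Sum>s=1..q c. Cf c s (c+1)) = (\<Sum>c=1..l. \<Sum>s=1..q c. if c < l then Cf c s (c+1) else 0)"
    by (simp only: lt_restrict2[symmetric, where h = "\<lambda>c. \<Sum>s=1..q c. Cf c s (c+1)"]) (intro sum.cong; simp)
  have e2: "(\<Sum>c=1..l. \<Sum>s=1..q c. \<Sum>c'=1..l. if c < c' \<and> s \<le> m then (if c' < l then Cf c s (c'+1) else 0) - Cf c s c' else 0)
     = (\<Sum>c=1..l. \<Sum>s=1..q c. if s \<le> m then - (if c < l then Cf c s (c+1) else 0) else 0)"
  proof (intro sum.cong refl)
    fix c s assume c: "c \<in> {1..l}"
    have "(\<Sum>c'=1..l. if c < c' \<and> s \<le> m then (if c' < l then Cf c s (c'+1) else 0) - Cf c s c' else 0)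
       = (if s \<le> m then (\<Sum>c'=1..l. if c < c' then (if c' < l then Cf c s (c'+1) else 0) - Cf c s c' else 0) else 0)"
      by (cases "s \<le> m") auto
    also have "\<dots> = (if s \<le> m then - (if c < l then Cf c s (c+1) else 0) else 0)"
      using TC[of c l "\<lambda>c'. Cf c s c'"] c by simp
    finally show "(\<Sum>c'=1..l. if c < c' \<and> s \<le> m then (if c' < l then Cf c s (c'+1) else 0) - Cf c s c' else 0)
       = (if s \<le> m then - (if c < l then Cf c s (c+1) else 0) else 0)" .
  qed
  have e3: "(\<Sum>c=1..l. \<Sum>s=1..q c. \<Sum>c'=1..l. if c' \<le> c \<and> m < s then (if c' < l then Cf c s (c'+1) else 0) - (if 1 < c' then Cf c s c' else 0) else 0)
     = (\<Sum>c=1..l. \<Sum>s=1..q c. if m < s then (if c < l then Cf c s (c+1) else 0) else 0)"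
  proof (intro sum.cong refl)
    fix c s assume c: "c \<in> {1..l}"
    have "(\<Sum>c'=1..l. if c' \<le> c \<and> m < s then (if c' < l then Cf c s (c'+1) else 0) - (if 1 < c' then Cf c s c' else 0) else 0)
       = (if m < s then (\<Sum>c'=1..l. if c' \<le> c then (if c' < l then Cf c s (c'+1) else 0) - (if 1 < c' then Cf c s c' else 0) else 0) else 0)"
      by (cases "m < s") auto
    also have "\<dots> = (if m < s then (if c < l then Cf c s (c+1) else 0) else 0)"
      using TD[of c l "\<lambda>c'. Cf c s c'"] c by simp
    finally show "(\<Sum>c'=1..l. if c' \<le> c \<and> m < s then (if c' < l then Cf c s (c'+1) else 0) - (if 1 < c' then Cf c s c' else 0) else 0)
       = (if m < s then (if c < l then Cf c s (c+1) else 0) else 0)" .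
  qed
  have "(\<Sum>c=1..l. \<Sum>s=1..q c. if c < l then Cf c s (c+1) else 0)
     + (\<Sum>c=1..l. \<Sum>s=1..q c. if s \<le> m then - (if c < l then Cf c s (c+1) else 0) else 0)
     - (\<Sum>c=1..l. \<Sum>s=1..q c. if m < s then (if c < l then Cf c s (c+1) else 0) else 0)
     = (\<Sum>c=1..l. \<Sum>s=1..q c. (if c < l then Cf c s (c+1) else 0)
          + (if s \<le> m then - (if c < l then Cf c s (c+1) else 0) else 0)
          - (if m < s then (if c < l then Cf c s (c+1) else 0) else (0::complex)))"
    by (simp only: sum.distrib sum_subtractf)
  also have "\<dots> = 0" by (intro sum.neutral ballI) auto
  finally show ?thesis unfolding e1 e2 e3 .
qed

lemma reorder3:
  fixes q :: "nat \<Rightarrow> nat" and Q :: nat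
  assumes qQ: "\<And>c. 1 \<le> c \<Longrightarrow> c \<le> l \<Longrightarrow> q c \<le> Q"
  shows "(\<Sum>c=1..(l::nat). \<Sum>s=1..q c. \<Sum>c'=1..l. F c s c')
       = (\<Sum>c'=1..l. \<Sum>s=1..Q. \<Sum>c=1..l. if s \<le> q c then F c s c' else (0::complex))"
proof -
  have "(\<Sum>c=1..(l::nat). \<Sum>s=1..q c. \<Sum>c'=1..l. F c s c')
      = (\<Sum>c=1..l. \<Sum>s=1..Q. if s \<le> q c then (\<Sum>c'=1..l. F c s c') else 0)"
  proof (rule sum.cong[OF refl])
    fix c assume c: "c \<in> {1..l}"
    have "(\<Sum>s=1..Q. if s \<le> q c then (\<Sum>c'=1..l. F c s c') else 0) = (\<Sum>s\<in>{1..Q} \<inter> {s. s \<le> q c}. \<Sum>c'=1..l. F c s c')"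
      by (subst sum.inter_restrict) auto
    also have "{1..Q} \<inter> {s. s \<le> q c} = {1..q c}" using qQ[of c] c by auto
    finally show "(\<Sum>s=1..q c. \<Sum>c'=1..l. F c s c') = (\<Sum>s=1..Q. if s \<le> q c then (\<Sum>c'=1..l. F c s c') else 0)" by simp
  qed
  also have "\<dots> = (\<Sum>s=1..Q. \<Sum>c=1..l. if s \<le> q c then (\<Sum>c'=1..l. F c s c') else 0)"
    by (rule sum.swap)
  also have "\<dots> = (\<Sum>s=1..Q. \<Sum>c=1..l. \<Sum>c'=1..l. if s \<le> q c then F c s c' else 0)"
    by (intro sum.cong refl) auto
  also have "\<dots> = (\<Sum>s=1..Q. \<Sum>c'=1..l. \<Sum>c=1..l. if s \<le> q c then F c s c' else 0)"
    by (rule sum.cong[OF refl]) (rule sum.swap)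
  also have "\<dots> = (\<Sum>c'=1..l. \<Sum>s=1..Q. \<Sum>c=1..l. if s \<le> q c then F c s c' else 0)"
    by (rule sum.swap)
  finally show ?thesis .
qed

lemma partB:
  fixes q :: "nat \<Rightarrow> nat" and m Q :: nat
  assumes qQ: "\<And>c. 1 \<le> c \<Longrightarrow> c \<le> l \<Longrightarrow> q c \<le> Q"
    and mq: "\<And>c. 1 \<le> c \<Longrightarrow> c \<le> l \<Longrightarrow> m \<le> q c"
    and dec: "\<And>c. 1 \<le> c \<Longrightarrow> c < l \<Longrightarrow> q (c+1) \<le> q c"
  shows "(\<Sum>c=1..(l::nat). \<Sum>s=1..q c. \<Sum>c'=1..l. if c < c' \<and> s \<le> m then Bf c' (c+1) s - (if 1 < c then Bf c' c s else 0) else 0)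
    - (\<Sum>c=1..l. \<Sum>s=1..q c. \<Sum>c'=1..l. if c' \<le> c \<and> m < s then (if c < l \<and> s \<le> q (c+1) then Bf c' (c+1) s else 0) - (if 1 < c then Bf c' c s else 0) else 0)
    - (\<Sum>c\<in>{1..<l}. \<Sum>s=1..q (c+1). Bf (c+1) (c+1) s)
    = (0::complex)"
proof -
  have e2: "(\<Sum>c=1..(l::nat). \<Sum>s=1..q c. \<Sum>c'=1..l. if c < c' \<and> s \<le> m then Bf c' (c+1) s - (if 1 < c then Bf c' c s else 0) else 0)
     = (\<Sum>c'=1..l. \<Sum>s=1..Q. if s \<le> m \<and> 1 < c' then Bf c' c' s else 0)"
  proof -
    { fix c' s assume c': "c' \<in> {1..l}"
    have "(\<Sum>c=1..l. if s \<le> q c then (if c < c' \<and> s \<le> m then Bf c' (c+1) s - (if 1 < c then Bf c' c s else 0) else 0) else 0)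
        = (if s \<le> m \<and> 1 < c' then Bf c' c' s else 0)"
    proof (cases "s \<le> m")
      case True
      have "(\<Sum>c=1..l. if s \<le> q c then (if c < c' \<and> s \<le> m then Bf c' (c+1) s - (if 1 < c then Bf c' c s else 0) else 0) else 0)
         = (\<Sum>c=1..l. if c < c' then Bf c' (c+1) s - (if 1 < c then Bf c' c s else 0) else 0)"
        using True mq by (intro sum.cong refl) (auto dest: order_trans[of s m])
      also have "\<dots> = (if 1 < c' then Bf c' c' s else 0)" using TA[of c' l "\<lambda>c. Bf c' c s"] c' by simp
      finally show ?thesis using True by simp
    next
      case False then show ?thesis by (auto intro!: sum.neutral)
    qed
    } note inner = this
    show ?thesis
      apply (rule trans[OF reorder3[where q=q and Q=Q and l=l]])
      apply (simp add: qQ)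
      apply (rule sum.cong[OF refl])+
      apply (erule inner)
      done
  qed
  have e3: "(\<Sum>c=1..l. \<Sum>s=1..q c. \<Sum>c'=1..l. if c' \<le> c \<and> m < s then (if c < l \<and> s \<le> q (c+1) then Bf c' (c+1) s else 0) - (if 1 < c then Bf c' c s else 0) else 0)
     = (\<Sum>c'=1..l. \<Sum>s=1..Q. if m < s then - (if s \<le> q c' \<and> 1 < c' then Bf c' c' s else 0) else 0)"
  proof -
    { fix c' s assume c': "c' \<in> {1..l}"
    have decs: "\<And>c. 1 \<le> c \<Longrightarrow> c < l \<Longrightarrow> s \<le> q (Suc c) \<Longrightarrow> s \<le> q c"
      using dec order_trans by fastforce
    have "(\<Sum>c=1..l. if s \<le> q c then (if c' \<le> c \<and> m < s then (if c < l \<and> s \<le> q (c+1) then Bf c' (c+1) s else 0) - (if 1 < c then Bf c' c s else 0) else 0) else 0)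
        = (if m < s then - (if s \<le> q c' \<and> 1 < c' then Bf c' c' s else 0) else 0)"
    proof (cases "m < s")
      case True
      have "(\<Sum>c=1..l. if s \<le> q c then (if c' \<le> c \<and> m < s then (if c < l \<and> s \<le> q (c+1) then Bf c' (c+1) s else 0) - (if 1 < c then Bf c' c s else 0) else 0) else 0)
         = (\<Sum>c=1..l. if s \<le> q c \<and> c' \<le> c then ((if c < l \<and> s \<le> q (c+1) then Bf c' (c+1) s else 0) - (if 1 < c then Bf c' c s else 0)) else 0)"
        using True by (intro sum.cong refl) auto
      also have "\<dots> = - (if s \<le> q c' \<and> 1 < c' then Bf c' c' s else 0)"
        using c' by (intro TB[where P = "\<lambda>c. s \<le> q c" and g = "\<lambda>c. Bf c' c s"]) (auto intro: decs)
      finally show ?thesis using True by simp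
    next
      case False then show ?thesis by (auto intro!: sum.neutral)
    qed
    } note inner = this
    show ?thesis
      apply (rule trans[OF reorder3[where q=q and Q=Q and l=l]])
      apply (simp add: qQ)
      apply (rule sum.cong[OF refl])+
      apply (erule inner)
      done
  qed
  have e0: "(\<Sum>c\<in>{1..<l}. \<Sum>s=1..q (c+1). Bf (c+1) (c+1) s)
     = (\<Sum>c'=1..l. \<Sum>s=1..Q. if s \<le> q c' \<and> 1 < c' then Bf c' c' s else 0)"
  proof -
    have "(\<Sum>c\<in>{1..<l}. \<Sum>s=1..q (c+1). Bf (c+1) (c+1) s) = (\<Sum>c'=1..l. if 1 < c' then (\<Sum>s=1..q (c'-1+1). Bf (c'-1+1) (c'-1+1) s) else 0)"
      by (rule tele_shift2[symmetric, where g = "\<lambda>c. \<Sum>s=1..q (c+1). Bf (c+1) (c+1) s"])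
    also have "\<dots> = (\<Sum>c'=1..l. \<Sum>s=1..Q. if s \<le> q c' \<and> 1 < c' then Bf c' c' s else 0)"
    proof (intro sum.cong refl)
      fix c' assume c': "c' \<in> {1..l}"
      have "(\<Sum>s=1..Q. if s \<le> q c' \<and> 1 < c' then Bf c' c' s else 0) = (if 1 < c' then (\<Sum>s\<in>{1..Q} \<inter> {s. s \<le> q c'}. Bf c' c' s) else 0)"
        by (simp add: sum.inter_restrict)
      also have "{1..Q} \<inter> {s. s \<le> q c'} = {1..q c'}" using qQ[of c'] c' by auto
      finally show "(if 1 < c' then (\<Sum>s=1..q (c'-1+1). Bf (c'-1+1) (c'-1+1) s) else 0) = (\<Sum>s=1..Q. if s \<le> q c' \<and> 1 < c' then Bf c' c' s else 0)"
        by simp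
    qed
    finally show ?thesis .
  qed
  have "(\<Sum>c'=1..l. \<Sum>s=1..Q. if s \<le> m \<and> 1 < c' then Bf c' c' s else 0)
      - (\<Sum>c'=1..l. \<Sum>s=1..Q. if m < s then - (if s \<le> q c' \<and> 1 < c' then Bf c' c' s else 0) else 0)
      - (\<Sum>c'=1..l. \<Sum>s=1..Q. if s \<le> q c' \<and> 1 < c' then Bf c' c' s else 0)
    = (\<Sum>c'=1..l. \<Sum>s=1..Q. (if s \<le> m \<and> 1 < c' then Bf c' c' s else 0)
      - (if m < s then - (if s \<le> q c' \<and> 1 < c' then Bf c' c' s else 0) else 0)
      - (if s \<le> q c' \<and> 1 < c' then Bf c' c' s else (0::complex)))"
    by (simp only: sum_subtractf)
  also have "\<dots> = 0"
  proof (intro sum.neutral ballI)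
    fix c' s assume c': "c' \<in> {1..l}"
    show "(if s \<le> m \<and> 1 < c' then Bf c' c' s else 0)
      - (if m < s then - (if s \<le> q c' \<and> 1 < c' then Bf c' c' s else 0) else 0)
      - (if s \<le> q c' \<and> 1 < c' then Bf c' c' s else (0::complex)) = 0"
      using mq[of c'] c' by auto
  qed
  finally show ?thesis unfolding e0 e2 e3 .
qed


lemma if_add0: "(if P then a + b else 0) = (if P then a else 0) + (if P then b else (0::complex))" by simp

lemma abstract_total:
  fixes q :: "nat \<Rightarrow> nat" and l m Q :: nat and Bf Cf :: "nat \<Rightarrow> nat \<Rightarrow> nat \<Rightarrow> complex"
    and H D alp gam :: "nat \<Rightarrow> complex"
  assumes qQ: "\<And>c. 1 \<le> c \<Longrightarrow> c \<le> l \<Longrightarrow> q c \<le> Q"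
    and mq: "\<And>c. 1 \<le> c \<Longrightarrow> c \<le> l \<Longrightarrow> m \<le> q c"
    and dec: "\<And>c. 1 \<le> c \<Longrightarrow> c < l \<Longrightarrow> q (c+1) \<le> q c"
    and gam: "\<And>c. gam c = (\<Sum>u\<in>{c+1..l}. alp u)"
  shows "(\<Sum>c\<in>{1..<l}. (\<Sum>s=1..q c. Cf c s (c+1)) - (\<Sum>s=1..q (c+1). Bf (c+1) (c+1) s) + alp (c+1) * D c
            + (if c+1 < l then H c else 0) - (if 1 < c then H (c-1) else 0))
     + (\<Sum>c=1..l. - gam c * ((if c < l then D c else 0) - (if 1 < c then D (c-1) else 0)))
     + (\<Sum>c=1..l. \<Sum>s=1..q c. \<Sum>c'=1..l. if c < c' \<and> s \<le> m then
          (Bf c' (c+1) s - (if 1 < c then Bf c' c s else 0)) + ((if c' < l then Cf c s (c'+1) else 0) - Cf c s c') else 0)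
     - (\<Sum>c=1..l. \<Sum>s=1..q c. \<Sum>c'=1..l. if c' \<le> c \<and> m < s then
          ((if c < l \<and> s \<le> q (c+1) then Bf c' (c+1) s else 0) - (if 1 < c then Bf c' c s else 0))
          + ((if c' < l then Cf c s (c'+1) else 0) - (if 1 < c' then Cf c s c' else 0)) else 0)
     = 0"
proof -
  let ?T0C = "\<Sum>c\<in>{1..<l}. \<Sum>s=1..q c. Cf c s (c+1)"
  let ?T0B = "\<Sum>c\<in>{1..<l}. \<Sum>s=1..q (c+1). Bf (c+1) (c+1) s"
  let ?T0D = "\<Sum>c\<in>{1..<l}. alp (c+1) * D c"
  let ?T0H = "\<Sum>c\<in>{1..<l}. (if c+1 < l then H c else 0) - (if 1 < c then H (c-1) else 0)"
  let ?T1 = "\<Sum>c=1..l. - gam c * ((if c < l then D c else 0) - (if 1 < c then D (c-1) else 0))"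
  let ?T2B = "\<Sum>c=1..l. \<Sum>s=1..q c. \<Sum>c'=1..l. if c < c' \<and> s \<le> m then Bf c' (c+1) s - (if 1 < c then Bf c' c s else 0) else 0"
  let ?T2C = "\<Sum>c=1..l. \<Sum>s=1..q c. \<Sum>c'=1..l. if c < c' \<and> s \<le> m then (if c' < l then Cf c s (c'+1) else 0) - Cf c s c' else 0"
  let ?T3B = "\<Sum>c=1..l. \<Sum>s=1..q c. \<Sum>c'=1..l. if c' \<le> c \<and> m < s then (if c < l \<and> s \<le> q (c+1) then Bf c' (c+1) s else 0) - (if 1 < c then Bf c' c s else 0) else 0"
  let ?T3C = "\<Sum>c=1..l. \<Sum>s=1..q c. \<Sum>c'=1..l. if c' \<le> c \<and> m < s then (if c' < l then Cf c s (c'+1) else 0) - (if 1 < c' then Cf c s c' else 0) else 0"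
  have s0: "(\<Sum>c\<in>{1..<l}. (\<Sum>s=1..q c. Cf c s (c+1)) - (\<Sum>s=1..q (c+1). Bf (c+1) (c+1) s) + alp (c+1) * D c
            + (if c+1 < l then H c else 0) - (if 1 < c then H (c-1) else 0)) = ?T0C - ?T0B + ?T0D + ?T0H"
    by (simp add: sum.distrib sum_subtractf algebra_simps)
  have s2: "(\<Sum>c=1..l. \<Sum>s=1..q c. \<Sum>c'=1..l. if c < c' \<and> s \<le> m then
          (Bf c' (c+1) s - (if 1 < c then Bf c' c s else 0)) + ((if c' < l then Cf c s (c'+1) else 0) - Cf c s c') else 0) = ?T2B + ?T2C"
    by (simp only: if_add0 sum.distrib)
  have s3: "(\<Sum>c=1..l. \<Sum>s=1..q c. \<Sum>c'=1..l. if c' \<le> c \<and> m < s then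
          ((if c < l \<and> s \<le> q (c+1) then Bf c' (c+1) s else 0) - (if 1 < c then Bf c' c s else 0))
          + ((if c' < l then Cf c s (c'+1) else 0) - (if 1 < c' then Cf c s c' else 0)) else 0) = ?T3B + ?T3C"
    by (simp only: if_add0 sum.distrib)
  have B: "?T2B - ?T3B - ?T0B = 0" by (rule partB[where q=q and l=l and m=m and Q=Q, OF qQ mq dec])
  have C: "?T0C + ?T2C - ?T3C = 0" by (rule partC[where q=q and l=l and m=m, OF mq])
  have Dp: "?T0D + ?T1 = 0" by (rule partD[where gam=gam and alp=alp and l=l, OF gam])
  have Hp: "?T0H = 0" by (rule partH)
  have lin: "\<And>c b d h t1 b2 c2 b3 c3 :: complex. (c - b + d + h) + t1 + (b2 + c2) - (b3 + c3) = (b2 - b3 - b) + (c + c2 - c3) + (d + t1) + h"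
    by (simp add: algebra_simps)
  show ?thesis unfolding s0 s2 s3 lin B C Dp Hp by simp
qed


lemma J_if: "(P \<Longrightarrow> f \<in> Jset q l k) \<Longrightarrow> (\<lambda>x. if P then f x else 0) \<in> Jset q l k"
  by (cases P) (auto intro: Jset.J_zero)

lemma sum3_neg: "(\<Sum>c=1..(l::nat). \<Sum>s=1..(q c::nat). \<Sum>ca=1..l. if P c s ca then - X c s ca else 0)
   = - (\<Sum>c=1..l. \<Sum>s=1..q c. \<Sum>ca=1..l. if P c s ca then X c s ca else (0::complex))"
proof -
  have h: "\<And>c s ca. (if P c s ca then - X c s ca else 0) = - (if P c s ca then X c s ca else (0::complex))" by simp
  show ?thesis by (simp only: h sum_negf)
qed

lemma W2_split:
  "vec_of (d0 q l k (W2 q l k p r)) x =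
     sum_list (map (\<lambda>i. sum_list (map (\<lambda>j. if colq q i = colq q j + 1 \<and> rowq q i = p \<and> rowq q j = r then 1 * vec_of (d0w q l k [(E i j, -1)]) x else 0) (idx q l))) (idx q l))
   + sum_list (map (\<lambda>i. sum_list (map (\<lambda>j. if colq q i = colq q j \<and> rowq q i = p \<and> rowq q j = r then - gamma q l k (colq q i) * vec_of (d0w q l k [(E i j, -2)]) x else 0) (idx q l))) (idx q l))
   + sum_list (map (\<lambda>u. sum_list (map (\<lambda>j. sum_list (map (\<lambda>i. sum_list (map (\<lambda>v.
     if colq q u = colq q j \<and> colq q j < colq q i \<and> colq q i = colq q v \<and> rowq q u = rowq q v \<and> rowq q v \<le> q l
        \<and> rowq q i = p \<and> rowq q j = r then 1 * vec_of (d0w q l k [(E u j, -1), (E i v, -1)]) x else 0)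
     (idx q l))) (idx q l))) (idx q l))) (idx q l))
   + sum_list (map (\<lambda>u. sum_list (map (\<lambda>j. sum_list (map (\<lambda>i. sum_list (map (\<lambda>v.
     if colq q u = colq q j \<and> colq q i \<le> colq q j \<and> colq q i = colq q v \<and> q l < rowq q v \<and> rowq q u = rowq q v
        \<and> rowq q i = p \<and> rowq q j = r then -1 * vec_of (d0w q l k [(E u j, -1), (E i v, -1)]) x else 0)
     (idx q l))) (idx q l))) (idx q l))) (idx q l))"
  unfolding W2_def vec_of_d0 map_append sum_list_append
  by (simp only: comp2_sum comp4_sum add.assoc)

lemma W2_in_J:
  assumes l1: "1 \<le> l"
    and mono: "\<forall>s. 1 \<le> s \<and> s < l \<longrightarrow> q (Suc s) \<le> q s"
    and pos1: "\<forall>s. 1 \<le> s \<and> s \<le> l \<longrightarrow> 1 \<le> q s"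
    and pr: "1 \<le> p" "p \<le> q l" "1 \<le> r" "r \<le> q l"
  shows "vec_of (d0 q l k (W2 q l k p r)) \<in> Jset q l k"
proof -
  have qm: "\<And>a b. 1 \<le> a \<Longrightarrow> a \<le> b \<Longrightarrow> b \<le> l \<Longrightarrow> q b \<le> q a" using q_mono[OF mono] by blast
  have pq: "\<And>c. 1 \<le> c \<Longrightarrow> c \<le> l \<Longrightarrow> p \<le> q c" using qm pr(2) le_trans by blast
  have rq: "\<And>c. 1 \<le> c \<Longrightarrow> c \<le> l \<Longrightarrow> r \<le> q c" using qm pr(4) le_trans by blast
  define junk where "junk i j = (\<lambda>x. vec_of (d0w q l k [(E i j, -1)]) x - vec_of (d0_gen q l k i j) x)" for i j
  define JK where "JK x = sum_list (map (\<lambda>i. sum_list (map (\<lambda>j. if colq q i = colq q j + 1 \<and> rowq q i = p \<and> rowq q j = r then junk i j x else 0) (idx q l))) (idx q l))" for x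
  have JK_in: "JK \<in> Jset q l k"
    unfolding JK_def
    apply (rule J_sum_list)
    apply (rule J_sum_list)
    apply (rule J_if)
    unfolding junk_def
    apply (rule d0w_single_J)
       apply (auto simp: idx_mem)
    done
  have main: "vec_of (d0 q l k (W2 q l k p r)) x = JK x" for x
  proof -
    have s0: "sum_list (map (\<lambda>i. sum_list (map (\<lambda>j. if colq q i = colq q j + 1 \<and> rowq q i = p \<and> rowq q j = r then 1 * vec_of (d0w q l k [(E i j, -1)]) x else 0) (idx q l))) (idx q l))
       = sum_list (map (\<lambda>i. sum_list (map (\<lambda>j. if colq q i = colq q j + 1 \<and> rowq q i = p \<and> rowq q j = r then 1 * vec_of (d0_gen q l k i j) x else 0) (idx q l))) (idx q l)) + JK x"
    proof -
      have h: "\<And>P (A::complex) B. (if P then 1 * B else 0) + (if P then A - B else 0) = (if P then 1 * A else 0)" by simp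
      show ?thesis unfolding JK_def junk_def by (simp only: h sum_list_addf[symmetric])
    qed
    have gam: "\<And>c. gamma q l k c = (\<Sum>u\<in>{c+1..l}. alpha q l k u)" by (simp add: gamma_def)
    have qQ: "\<And>c. 1 \<le> c \<Longrightarrow> c \<le> l \<Longrightarrow> q c \<le> q 1" using qm by auto
    have mq: "\<And>c. 1 \<le> c \<Longrightarrow> c \<le> l \<Longrightarrow> q l \<le> q c" using qm by auto
    have dec: "\<And>c. 1 \<le> c \<Longrightarrow> c < l \<Longrightarrow> q (c+1) \<le> q c" using mono by auto
    have zero: "(\<Sum>c\<in>{1..<l}. (\<Sum>s=1..q c. CfX q p r x c s (c+1)) - (\<Sum>s=1..q (c+1). BfX q p r x (c+1) (c+1) s)
         + alpha q l k (c+1) * DX q p r x c + (if c+1 < l then HX q p r x c else 0) - (if 1 < c then HX q p r x (c-1) else 0))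
       + (\<Sum>c=1..l. - gamma q l k c * ((if c < l then DX q p r x c else 0) - (if 1 < c then DX q p r x (c-1) else 0)))
       + (\<Sum>c=1..l. \<Sum>s=1..q c. \<Sum>ca=1..l. if c < ca \<and> s \<le> q l then
          (BfX q p r x ca (c+1) s - (if 1 < c then BfX q p r x ca c s else 0)) + ((if ca < l then CfX q p r x c s (ca+1) else 0) - CfX q p r x c s ca) else 0)
       - (\<Sum>c=1..l. \<Sum>s=1..q c. \<Sum>ca=1..l. if ca \<le> c \<and> q l < s then
          ((if c < l \<and> s \<le> q (c+1) then BfX q p r x ca (c+1) s else 0) - (if 1 < c then BfX q p r x ca c s else 0))
          + ((if ca < l then CfX q p r x c s (ca+1) else 0) - (if 1 < ca then CfX q p r x c s ca else 0)) else 0) = 0"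
      by (rule abstract_total[where q=q and l=l and m="q l" and Q="q 1" and gam="gamma q l k" and alp="alpha q l k" and Bf="BfX q p r x" and Cf="CfX q p r x" and H="HX q p r x" and D="DX q p r x", OF qQ mq dec gam])
    let ?S0 = "sum_list (map (\<lambda>i. sum_list (map (\<lambda>j. if colq q i = colq q j + 1 \<and> rowq q i = p \<and> rowq q j = r then 1 * vec_of (d0_gen q l k i j) x else 0) (idx q l))) (idx q l))"
    let ?S1 = "sum_list (map (\<lambda>i. sum_list (map (\<lambda>j. if colq q i = colq q j \<and> rowq q i = p \<and> rowq q j = r then - gamma q l k (colq q i) * vec_of (d0w q l k [(E i j, -2)]) x else 0) (idx q l))) (idx q l))"
    let ?S2 = "sum_list (map (\<lambda>u. sum_list (map (\<lambda>j. sum_list (map (\<lambda>i. sum_list (map (\<lambda>v.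
     if colq q u = colq q j \<and> colq q j < colq q i \<and> colq q i = colq q v \<and> rowq q u = rowq q v \<and> rowq q v \<le> q l
        \<and> rowq q i = p \<and> rowq q j = r then 1 * vec_of (d0w q l k [(E u j, -1), (E i v, -1)]) x else 0)
     (idx q l))) (idx q l))) (idx q l))) (idx q l))"
    let ?S3 = "sum_list (map (\<lambda>u. sum_list (map (\<lambda>j. sum_list (map (\<lambda>i. sum_list (map (\<lambda>v.
     if colq q u = colq q j \<and> colq q i \<le> colq q j \<and> colq q i = colq q v \<and> q l < rowq q v \<and> rowq q u = rowq q v
        \<and> rowq q i = p \<and> rowq q j = r then -1 * vec_of (d0w q l k [(E u j, -1), (E i v, -1)]) x else 0)
     (idx q l))) (idx q l))) (idx q l))) (idx q l))"
    let ?T0 = "\<Sum>c\<in>{1..<l}. (\<Sum>s=1..q c. CfX q p r x c s (c+1)) - (\<Sum>s=1..q (c+1). BfX q p r x (c+1) (c+1) s)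
         + alpha q l k (c+1) * DX q p r x c + (if c+1 < l then HX q p r x c else 0) - (if 1 < c then HX q p r x (c-1) else 0)"
    let ?T1 = "\<Sum>c=1..l. - gamma q l k c * ((if c < l then DX q p r x c else 0) - (if 1 < c then DX q p r x (c-1) else 0))"
    let ?T2 = "\<Sum>c=1..l. \<Sum>s=1..q c. \<Sum>ca=1..l. if c < ca \<and> s \<le> q l then
          (BfX q p r x ca (c+1) s - (if 1 < c then BfX q p r x ca c s else 0)) + ((if ca < l then CfX q p r x c s (ca+1) else 0) - CfX q p r x c s ca) else 0"
    let ?T3 = "\<Sum>c=1..l. \<Sum>s=1..q c. \<Sum>ca=1..l. if ca \<le> c \<and> q l < s then
          ((if c < l \<and> s \<le> q (c+1) then BfX q p r x ca (c+1) s else 0) - (if 1 < c then BfX q p r x ca c s else 0))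
          + ((if ca < l then CfX q p r x c s (ca+1) else 0) - (if 1 < ca then CfX q p r x c s ca else 0)) else 0"
    have b0: "?S0 = ?T0" by (rule BLK0[OF pr(1,3) pq rq])
    have b1: "?S1 = ?T1" by (rule BLK1[OF pr(1,3) pq rq])
    have b2: "?S2 = ?T2"
      apply (rule BLK2[where q=q and l=l and p=p and r=r and k=k and x=x])
      using l1 pr qm by auto
    have b3': "?S3 = (\<Sum>c=1..l. \<Sum>s=1..q c. \<Sum>ca=1..l. if ca \<le> c \<and> q l < s then
        - (((if c < l \<and> s \<le> q (c+1) then BfX q p r x ca (c+1) s else 0) - (if 1 < c then BfX q p r x ca c s else 0))
          + ((if ca < l then CfX q p r x c s (ca+1) else 0) - (if 1 < ca then CfX q p r x c s ca else 0))) else 0)"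
      apply (rule BLK3[where q=q and l=l and p=p and r=r and k=k and x=x])
      using l1 pr qm by auto
    have b3: "?S3 = - ?T3" unfolding b3' by (rule sum3_neg)
    have "vec_of (d0 q l k (W2 q l k p r)) x = (?S0 + JK x) + ?S1 + ?S2 + ?S3"
      using W2_split[of q l k p r x] s0 by simp
    also have "\<dots> = (?T0 + ?T1 + ?T2 - ?T3) + JK x" unfolding b0 b1 b2 b3 by simp
    also have "\<dots> = JK x" unfolding zero by simp
    finally show ?thesis .
  qed
  show ?thesis by (rule J_eq[OF JK_in]) (rule main)
qed


theorem theorem4p1:
  fixes l :: nat and q :: "nat \<Rightarrow> nat" and k :: complex
  assumes "1 \<le> l"
    and "\<forall>s. 1 \<le> s \<and> s < l \<longrightarrow> q (Suc s) \<le> q s"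
    and "\<forall>s. 1 \<le> s \<and> s \<le> l \<longrightarrow> 1 \<le> q s"
  shows "(\<forall>p r. ((1 \<le> p \<and> p \<le> q l \<and> 1 \<le> r \<and> r \<le> q l) \<or> (q l < p \<and> p = r \<and> p \<le> q 1))
                 \<longrightarrow> in_Walg q l k (W1 q l p r))
       \<and> (\<forall>p r. 1 \<le> p \<and> p \<le> q l \<and> 1 \<le> r \<and> r \<le> q l \<longrightarrow> in_Walg q l k (W2 q l k p r))"
proof (intro conjI allI impI)
  fix p r
  assume pr: "(1 \<le> p \<and> p \<le> q l \<and> 1 \<le> r \<and> r \<le> q l) \<or> (q l < p \<and> p = r \<and> p \<le> q 1)"
  have "vec_of (d0 q l k (W1 q l p r)) = (\<lambda>_. 0)"
    using W1_zero[OF assms pr] by (intro ext) simp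
  then show "in_Walg q l k (W1 q l p r)"
    unfolding in_Walg_def zero_in_V_def using Jset.J_zero by simp
next
  fix p r
  assume pr: "1 \<le> p \<and> p \<le> q l \<and> 1 \<le> r \<and> r \<le> q l"
  show "in_Walg q l k (W2 q l k p r)"
    unfolding in_Walg_def zero_in_V_def
    using W2_in_J[OF assms] pr by auto
qed


end
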